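(* Let $(X,\mathcal{A},\mu,\tau,C_\tau)$ be a composition dynamical system on $\mathbb{L}^{\varphi,h}(\mu)$, where in addition $\tau$ is bijective and $\tau^{-1}$ satisfies $\mu(\tau(A))\le M'\mu(A)$ for all $A\in\mathcal{A}$ and some $M'>0$ (so $C_\tau$ is invertible with $C_\tau^{-1}=C_{\tau^{-1}}$), and assume $\varphi$ satisfies the $\Delta_2$-condition. Then $C_\tau$ is uniformly expansive if and only if $\mathcal{A}^+=\{A\in\mathcal{A}:0<\mu(A)<\infty\}$ can be written as $\mathcal{A}^+=\mathcal{A}^+_B\cup\mathcal{A}^+_C$ such that $$\lim_{n\to\infty}\frac{\varphi^{-1}\!\left(\frac{1}{\int_0^{\mu(A)}h(t)\,dt}\right)}{\varphi^{-1}\!\left(\frac{1}{\int_0^{\mu(\tau^{n}(A))}h(t)\,dt}\right)}=\infty \text{ uniformly on } \mathcal{A}^+_B,$$ and $$\lim_{n\to\infty}\frac{\varphi^{-1}\!\left(\frac{1}{\int_0^{\mu(A)}h(t)\,dt}\right)}{\varphi^{-1}\!\left(\frac{1}{\int_0^{\mu(\tau^{-n}(A))}h(t)\,dt}\right)}=\infty \text{ uniformly on } \mathcal{A}^+_C.$$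
   Context: Let $(X,\mathcal{A},\mu)$ be a measure space. For a measurable $g$, its distribution function is $\mu_g(\lambda)=\mu\{x:|g(x)|>\lambda\}$ and its non-increasing rearrangement is $g^*(t)=\inf\{\lambda>0:\mu_g(\lambda)\le t\}$. An Orlicz function is a convex $\varphi:[0,\infty)\to[0,\infty)$ with $\varphi(0)=0$ and $\varphi(s)\to\infty$ as $s\to\infty$; here $\varphi$ is assumed continuous and strictly increasing, and $\varphi^{-1}$ denotes its inverse. $\varphi$ satisfies the $\Delta_2$-condition if there is $K>0$ with $\varphi(2s)\le K\varphi(s)$ for all $s>0$. A weight is a locally integrable, non-increasing function $h:[0,\mu(X))\to(0,\infty)$. The Orlicz–Lorentz space is $\mathbb{L}^{\varphi,h}(\mu)=\{g \text{ measurable}: I_{\varphi,h}(\lambda g)<\infty \text{ for some }\lambda>0\}$ with $I_{\varphi,h}(g)=\int_0^{\mu(X)}\varphi(g^*(t))h(t)\,dt$, normed by $\|g\|_{\varphi,h}=\inf\{\lambda>0: I_{\varphi,h}(g/\lambda)\le 1\}$ (functions equal a.e. identified). For $A\in\mathcal{A}$ with $0<\mu(A)<\infty$ one has $\|\chi_A\|_{\varphi,h}=1/\varphi^{-1}\big(1/\int_0^{\mu(A)}h(t)\,dt\big)$. A composition dynamical system $(X,\mathcal{A},\mu,\tau,C_\tau)$ means: $(X,\mathcal{A},\mu)$ is $\sigma$-finite; $\tau:X\to X$ is injective and bi-measurable; there is $M>0$ with $\mu(\tau^{-1}(A))\le M\mu(A)$ for all $A\in\mathcal{A}$; and $C_\tau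 g=g\circ\tau$ is the (bounded) composition operator on $\mathbb{L}^{\varphi,h}(\mu)$. An invertible bounded operator $T$ on a Banach space $Y$ with unit sphere $S_Y$ is uniformly expansive if there is $n\in\mathbb{N}$ such that for every $y\in S_Y$, $\|T^n y\|\ge2$ or $\|T^{-n}y\|\ge2$ (equivalently, $S_Y=B\cup C$ with $\|T^n y\|\to\infty$ uniformly on $B$ and $\|T^{-n}y\|\to\infty$ uniformly on $C$ as $n\to\infty$). *)

theory Defs
  imports "HOL-Analysis.Analysis"
begin

definition orlicz_function :: "(real \<Rightarrow> real) \<Rightarrow> bool" where
  "orlicz_function \<phi> \<longleftrightarrow>
     convex_on {0..} \<phi> \<and> \<phi> 0 = 0 \<and> (\<forall>s\<ge>0. \<phi> s \<ge> 0) \<and>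
     filterlim \<phi> at_top at_top \<and>
     continuous_on {0..} \<phi> \<and> strict_mono_on {0..} \<phi>"

definition delta2 :: "(real \<Rightarrow> real) \<Rightarrow> bool" where
  "delta2 \<phi> \<longleftrightarrow> (\<exists>K>0. \<forall>s>0. \<phi> (2 * s) \<le> K * \<phi> s)"

definition phi_inv :: "(real \<Rightarrow> real) \<Rightarrow> real \<Rightarrow> real" where
  "phi_inv \<phi> = inv_into {0..} \<phi>"

definition wdom :: "'a measure \<Rightarrow> real set" where
  "wdom M = {t. 0 \<le> t \<and> ennreal t < emeasure M (space M)}"

definition weight :: "'a measure \<Rightarrow> (real \<Rightarrow> real) \<Rightarrow> bool" where
  "weight M h \<longleftrightarrow>
     (\<forall>t\<in>wdom M. h t > 0) \<and>
     (\<forall>s\<in>wdom M. \<forall>t\<in>wdom M. s \<le> t \<longrightarrow> h t \<le> h s) \<and>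
     (\<forall>b\<in>wdom M. set_integrable lborel {0..b} h)"

definition distr_fun :: "'a measure \<Rightarrow> ('a \<Rightarrow> real) \<Rightarrow> real \<Rightarrow> ennreal" where
  "distr_fun M g c = emeasure M {x \<in> space M. c < \<bar>g x\<bar>}"

text \<open>Non-increasing rearrangement; value \<infinity> if the defining set is empty.\<close>
definition rearr :: "'a measure \<Rightarrow> ('a \<Rightarrow> real) \<Rightarrow> real \<Rightarrow> ennreal" where
  "rearr M g t = (INF c\<in>{c::real. 0 < c \<and> distr_fun M g c \<le> ennreal t}. ennreal c)"

definition phi_ext :: "(real \<Rightarrow> real) \<Rightarrow> ennreal \<Rightarrow> ennreal" where
  "phi_ext \<phi> x = (if x = \<infinity> then \<infinity> else ennreal (\<phi> (enn2real x)))"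

definition modular :: "(real \<Rightarrow> real) \<Rightarrow> (real \<Rightarrow> real) \<Rightarrow> 'a measure \<Rightarrow> ('a \<Rightarrow> real) \<Rightarrow> ennreal" where
  "modular \<phi> h M g =
     (\<integral>\<^sup>+ t \<in> wdom M. phi_ext \<phi> (rearr M g t) * ennreal (h t) \<partial>lborel)"

definition OL_space :: "(real \<Rightarrow> real) \<Rightarrow> (real \<Rightarrow> real) \<Rightarrow> 'a measure \<Rightarrow> ('a \<Rightarrow> real) set" where
  "OL_space \<phi> h M = {g \<in> borel_measurable M. \<exists>c>0. modular \<phi> h M (\<lambda>x. c * g x) < \<infinity>}"

definition OL_norm :: "(real \<Rightarrow> real) \<Rightarrow> (real \<Rightarrow> real) \<Rightarrow> 'a measure \<Rightarrow> ('a \<Rightarrow> real) \<Rightarrow> real" where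
  "OL_norm \<phi> h M g = Inf {c::real. 0 < c \<and> modular \<phi> h M (\<lambda>x. g x / c) \<le> 1}"

definition comp_dyn_system ::
  "(real \<Rightarrow> real) \<Rightarrow> (real \<Rightarrow> real) \<Rightarrow> 'a measure \<Rightarrow> ('a \<Rightarrow> 'a) \<Rightarrow> bool" where
  "comp_dyn_system \<phi> h M \<tau> \<longleftrightarrow>
     sigma_finite_measure M \<and> orlicz_function \<phi> \<and> weight M h \<and>
     \<tau> \<in> measurable M M \<and> inj_on \<tau> (space M) \<and>
     (\<forall>A\<in>sets M. \<tau> ` A \<in> sets M) \<and>
     (\<exists>c>0. \<forall>A\<in>sets M. emeasure M (\<tau> -` A \<inter> space M) \<le> ennreal c * emeasure M A) \<and>
     (\<exists>c. \<forall>g\<in>OL_space \<phi> h M. (g \<circ> \<tau>) \<in> OL_space \<phi> h M \<and>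
            OL_norm \<phi> h M (g \<circ> \<tau>) \<le> c * OL_norm \<phi> h M g)"

text \<open>Uniform expansivity of C_tau (with inverse C_{tau^{-1}}) on the unit sphere.
  Elements of the space are represented by functions; the norm does not depend
  on the representative of an a.e. class.\<close>
definition comp_unif_expansive ::
  "(real \<Rightarrow> real) \<Rightarrow> (real \<Rightarrow> real) \<Rightarrow> 'a measure \<Rightarrow> ('a \<Rightarrow> 'a) \<Rightarrow> bool" where
  "comp_unif_expansive \<phi> h M \<tau> \<longleftrightarrow>
     (\<exists>n::nat. \<forall>g\<in>OL_space \<phi> h M. OL_norm \<phi> h M g = 1 \<longrightarrow>
        OL_norm \<phi> h M (g \<circ> (\<tau> ^^ n)) \<ge> 2 \<or>
        OL_norm \<phi> h M (g \<circ> (inv_into (space M) \<tau> ^^ n)) \<ge> 2)"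

definition Wint :: "(real \<Rightarrow> real) \<Rightarrow> real \<Rightarrow> real" where
  "Wint h s = (LINT t:{0..<s}|lborel. h t)"

text \<open>phi^{-1}(1/W(mu A)), i.e. 1 / norm of the indicator of A.\<close>
definition fund :: "(real \<Rightarrow> real) \<Rightarrow> (real \<Rightarrow> real) \<Rightarrow> 'a measure \<Rightarrow> 'a set \<Rightarrow> real" where
  "fund \<phi> h M A = phi_inv \<phi> (1 / Wint h (measure M A))"

definition Aplus :: "'a measure \<Rightarrow> 'a set set" where
  "Aplus M = {A \<in> sets M. 0 < emeasure M A \<and> emeasure M A < \<infinity>}"

end

theory Submission
  imports Defs
begin


lemma orl_mono_less:
  assumes "orlicz_function \<phi>" "0 \<le> x" "x < y" shows "\<phi> x < \<phi> y"
  using assms unfolding orlicz_function_def strict_mono_on_def by auto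

lemma orl_mono:
  assumes "orlicz_function \<phi>" "0 \<le> x" "x \<le> y" shows "\<phi> x \<le> \<phi> y"
  using orl_mono_less[OF assms(1,2), of y] assms(3) by (cases "x = y") auto

lemma orl_nonneg: "orlicz_function \<phi> \<Longrightarrow> 0 \<le> x \<Longrightarrow> 0 \<le> \<phi> x"
  unfolding orlicz_function_def by auto

lemma orl_zero: "orlicz_function \<phi> \<Longrightarrow> \<phi> 0 = 0"
  unfolding orlicz_function_def by auto

lemma orl_pos: "orlicz_function \<phi> \<Longrightarrow> 0 < x \<Longrightarrow> 0 < \<phi> x"
  using orl_mono_less[of \<phi> 0 x] orl_zero[of \<phi>] by auto

lemma orl_surj:
  assumes o: "orlicz_function \<phi>" and y: "0 \<le> y"
  shows "\<exists>x\<ge>0. \<phi> x = y"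
proof -
  have "filterlim \<phi> at_top at_top" using o unfolding orlicz_function_def by auto
  then have "eventually (\<lambda>x. y \<le> \<phi> x) at_top" by (simp add: filterlim_at_top)
  then obtain b where b: "\<And>x. x \<ge> b \<Longrightarrow> y \<le> \<phi> x" by (auto simp: eventually_at_top_linorder)
  define c where "c = max b 0"
  have "y \<le> \<phi> c" using b c_def by auto
  moreover have "\<phi> 0 \<le> y" using orl_zero[OF o] y by auto
  moreover have "continuous_on {0..c} \<phi>"
    using o unfolding orlicz_function_def by (auto intro: continuous_on_subset)
  ultimately obtain x where "0 \<le> x" "x \<le> c" "\<phi> x = y"
    using IVT'[of \<phi> 0 y c] c_def by auto
  then show ?thesis by auto
qed

lemma orl_inj: "orlicz_function \<phi> \<Longrightarrow> inj_on \<phi> {0..}"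
  unfolding orlicz_function_def using strict_mono_on_imp_inj_on by blast

lemma phi_inv:
  assumes o: "orlicz_function \<phi>" and y: "0 \<le> y"
  shows "0 \<le> phi_inv \<phi> y" "\<phi> (phi_inv \<phi> y) = y"
proof -
  have "y \<in> \<phi> ` {0..}" using orl_surj[OF o y] by auto
  then show "0 \<le> phi_inv \<phi> y" "\<phi> (phi_inv \<phi> y) = y"
    unfolding phi_inv_def using inv_into_into[of y \<phi> "{0..}"] f_inv_into_f[of y \<phi> "{0..}"] by auto
qed

lemma phi_inv_phi:
  assumes o: "orlicz_function \<phi>" and x: "0 \<le> x"
  shows "phi_inv \<phi> (\<phi> x) = x"
  unfolding phi_inv_def using inv_into_f_f[OF orl_inj[OF o]] x by auto

lemma phi_le_iff:
  assumes o: "orlicz_function \<phi>" and "0 \<le> x" "0 \<le> y"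
  shows "\<phi> x \<le> y \<longleftrightarrow> x \<le> phi_inv \<phi> y"
  using phi_inv[OF o assms(3)] orl_mono[OF o, of x "phi_inv \<phi> y"]
    orl_mono_less[OF o, of "phi_inv \<phi> y" x] assms by force

lemma phi_less_iff:
  assumes o: "orlicz_function \<phi>" and "0 \<le> x" "0 \<le> y"
  shows "y < \<phi> x \<longleftrightarrow> phi_inv \<phi> y < x"
  using phi_le_iff[OF assms] by linarith

lemma phi_inv_mono:
  assumes o: "orlicz_function \<phi>" and "0 \<le> x" "x \<le> y"
  shows "phi_inv \<phi> x \<le> phi_inv \<phi> y"
  using phi_le_iff[OF o phi_inv(1)[OF o assms(2)], of y] phi_inv[OF o assms(2)] assms by auto

lemma phi_inv_pos:
  assumes o: "orlicz_function \<phi>" and "0 < y"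
  shows "0 < phi_inv \<phi> y"
  using phi_inv[OF o, of y] assms orl_zero[OF o] by (metis less_eq_real_def)

lemma orl_convex_scale:
  assumes o: "orlicz_function \<phi>" and "0 \<le> t" "t \<le> 1" "0 \<le> x"
  shows "\<phi> (t * x) \<le> t * \<phi> x"
proof -
  have c: "convex_on {0..} \<phi>" using o unfolding orlicz_function_def by auto
  have "\<phi> ((1 - t) *\<^sub>R 0 + t *\<^sub>R x) \<le> (1 - t) * \<phi> 0 + t * \<phi> x"
    using convex_onD[OF c, of t 0 x] assms by auto
  then show ?thesis using orl_zero[OF o] by simp
qed

lemma antimono_borel:
  fixes F :: "real \<Rightarrow> 'b::{linorder_topology, second_countable_topology}"
  assumes am: "\<And>x y. x \<le> y \<Longrightarrow> F y \<le> F x"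
  shows "F \<in> borel_measurable borel"
proof (rule borel_measurableI_greater)
  fix y
  define S where "S = {x. y < F x}"
  have dc: "x \<in> S" if "x' \<in> S" "x \<le> x'" for x x'
    using that am[of x x'] unfolding S_def by (auto intro: less_le_trans)
  have "mono (\<lambda>x. - indicator S x :: real)"
    unfolding mono_def using dc by (auto simp: indicator_def)
  then have "(\<lambda>x. - indicator S x :: real) \<in> borel_measurable borel"
    by (rule borel_measurable_mono)
  then have "(\<lambda>x. - (- indicator S x :: real)) \<in> borel_measurable borel"
    by measurable
  then have "(indicator S :: real \<Rightarrow> real) \<in> borel_measurable borel" by simp
  then have "S \<in> sets borel" using borel_measurable_indicator_iff[of S borel, where 'x=real] by simp
  then show "{x \<in> space borel. y < F x} \<in> sets borel" unfolding S_def by simp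
qed

lemma emeasure_lborel_below:
  "emeasure lborel {s::real. 0 \<le> s \<and> ennreal s < e} = e"
proof (cases e)
  case (real r)
  then have "{s::real. 0 \<le> s \<and> ennreal s < e} = {0..<r}"
    by (auto simp: ennreal_less_iff)
  then show ?thesis using real by simp
next
  case top
  then have eq: "{s::real. 0 \<le> s \<and> ennreal s < e} = {0..}" by auto
  have "ennreal (of_nat n) \<le> emeasure lborel {0::real..}" for n
  proof -
    have "emeasure lborel {0::real..of_nat n} \<le> emeasure lborel {0::real..}"
      by (rule emeasure_mono) auto
    then show ?thesis by simp
  qed
  then have "(SUP n. of_nat n :: ennreal) \<le> emeasure lborel {0::real..}"
    by (intro SUP_least) (simp add: ennreal_of_nat_eq_real_of_nat)
  then show ?thesis using eq top ennreal_SUP_of_nat_eq_top by (simp add: top_unique)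
qed

lemma rearr_antimono:
  "s \<le> t \<Longrightarrow> rearr M g t \<le> rearr M g s"
  unfolding rearr_def
  by (rule INF_superset_mono) (auto intro: order_trans ennreal_leI)

lemma phi_ext_mono:
  assumes o: "orlicz_function \<phi>" and "x \<le> y"
  shows "phi_ext \<phi> x \<le> phi_ext \<phi> y"
proof (cases "y = \<infinity>")
  case True then show ?thesis by (simp add: phi_ext_def)
next
  case False
  then have "x \<noteq> \<infinity>" using assms(2) by (auto simp: top_unique)
  moreover have "enn2real x \<le> enn2real y" using assms(2) False by (simp add: enn2real_mono top.not_eq_extremum)
  ultimately show ?thesis using False orl_mono[OF o, of "enn2real x" "enn2real y"]
    by (simp add: phi_ext_def ennreal_leI)
qed

lemma distr_fun_antimono:
  assumes g: "g \<in> borel_measurable M" and "a \<le> b"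
  shows "distr_fun M g b \<le> distr_fun M g a"
  unfolding distr_fun_def using assms by (intro emeasure_mono) auto

lemma rearr_less_iff:
  assumes g: "g \<in> borel_measurable M" and l: "0 \<le> l" and t: "0 \<le> t"
  shows "ennreal l < rearr M g t \<longleftrightarrow> ennreal t < distr_fun M g l"
proof
  assume "ennreal l < rearr M g t"
  show "ennreal t < distr_fun M g l"
  proof (rule ccontr)
    assume "\<not> ennreal t < distr_fun M g l"
    then have le: "distr_fun M g l \<le> ennreal t" by simp
    have "rearr M g t \<le> ennreal l"
    proof (rule ennreal_le_epsilon)
      fix e :: real assume e: "0 < e"
      have "distr_fun M g (l + e) \<le> ennreal t"
        using distr_fun_antimono[OF g, of l "l+e"] e le by auto
      then have "rearr M g t \<le> ennreal (l + e)"
        unfolding rearr_def using l e by (intro INF_lower2[of "l+e"]) auto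
      then show "rearr M g t \<le> ennreal l + ennreal e" using l e by (simp add: ennreal_plus)
    qed
    then show False using \<open>ennreal l < rearr M g t\<close> by simp
  qed
next
  assume lt: "ennreal t < distr_fun M g l"
  show "ennreal l < rearr M g t"
  proof (rule ccontr)
    assume "\<not> ennreal l < rearr M g t"
    then have le: "rearr M g t \<le> ennreal l" by simp
    define A where "A k = {x \<in> space M. l + 1 / Suc k < \<bar>g x\<bar>}" for k :: nat
    have Ak: "emeasure M (A k) \<le> ennreal t" for k
    proof -
      have "rearr M g t < ennreal (l + 1 / Suc k)"
        using le l by (intro le_less_trans[OF le]) (simp add: ennreal_less_iff)
      then obtain c where c: "0 < c" "distr_fun M g c \<le> ennreal t" "ennreal c < ennreal (l + 1/Suc k)"
        unfolding rearr_def INF_less_iff by auto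
      then have "c \<le> l + 1 / Suc k" using l ennreal_less_iff[of c "l + 1 / Suc k"] by (simp del: ennreal_plus)
      then have "distr_fun M g (l + 1 / Suc k) \<le> distr_fun M g c"
        by (rule distr_fun_antimono[OF g])
      then show ?thesis using c unfolding A_def distr_fun_def by simp
    qed
    have sets: "range A \<subseteq> sets M" unfolding A_def using g by auto
    have inc: "incseq A"
    proof (rule incseq_SucI)
      fix k
      have "l + 1 / Suc (Suc k) \<le> l + 1 / Suc k"
        by (simp add: frac_le)
      then show "A k \<subseteq> A (Suc k)" unfolding A_def by auto
    qed
    have un: "(\<Union>k. A k) = {x \<in> space M. l < \<bar>g x\<bar>}"
    proof
      show "(\<Union>k. A k) \<subseteq> {x \<in> space M. l < \<bar>g x\<bar>}"
        unfolding A_def by auto (smt (verit) of_nat_0_le_iff divide_nonneg_nonneg)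
    next
      show "{x \<in> space M. l < \<bar>g x\<bar>} \<subseteq> (\<Union>k. A k)"
      proof
        fix x assume x: "x \<in> {x \<in> space M. l < \<bar>g x\<bar>}"
        then have "0 < \<bar>g x\<bar> - l" by auto
        then obtain k where "1 / Suc k < \<bar>g x\<bar> - l"
          using nat_approx_posE by blast
        then have "l + 1 / Suc k < \<bar>g x\<bar>" by simp
        then show "x \<in> (\<Union>k. A k)" using x unfolding A_def by blast
      qed
    qed
    have "distr_fun M g l = (SUP k. emeasure M (A k))"
      using SUP_emeasure_incseq[OF sets inc] un unfolding distr_fun_def by simp
    also have "\<dots> \<le> ennreal t" using Ak by (intro SUP_least) auto
    finally show False using lt by simp
  qed
qed

lemma phi_ext_less_iff:
  assumes o: "orlicz_function \<phi>" and s: "0 \<le> s"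
  shows "ennreal s < phi_ext \<phi> x \<longleftrightarrow> ennreal (phi_inv \<phi> s) < x"
proof (cases "x = \<infinity>")
  case True then show ?thesis by (simp add: phi_ext_def)
next
  case False
  then obtain r where r: "0 \<le> r" "x = ennreal r" by (cases x) auto
  then show ?thesis using phi_less_iff[OF o r(1) s] phi_inv(1)[OF o s] s orl_nonneg[OF o r(1)]
    by (simp add: phi_ext_def ennreal_less_iff)
qed

lemma key_iff:
  assumes o: "orlicz_function \<phi>" and g: "g \<in> borel_measurable M" and s: "0 \<le> s" and t: "0 \<le> t"
  shows "ennreal s < phi_ext \<phi> (rearr M g t) \<longleftrightarrow> ennreal t < distr_fun M g (phi_inv \<phi> s)"
  using phi_ext_less_iff[OF o s] rearr_less_iff[OF g phi_inv(1)[OF o s] t] by simp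

definition wh :: "'a measure \<Rightarrow> (real \<Rightarrow> real) \<Rightarrow> real \<Rightarrow> real" where
  "wh M h t = (if t \<in> wdom M then h t else 0)"

definition Wf :: "'a measure \<Rightarrow> (real \<Rightarrow> real) \<Rightarrow> ennreal \<Rightarrow> ennreal" where
  "Wf M h m = (\<integral>\<^sup>+ t. ennreal (wh M h t) * indicator {t. ennreal t < m} t \<partial>lborel)"

lemma wdom_down: "t \<in> wdom M \<Longrightarrow> 0 \<le> s \<Longrightarrow> s \<le> t \<Longrightarrow> s \<in> wdom M"
  unfolding wdom_def by (auto intro: le_less_trans ennreal_leI)

lemma wh_nonneg: "weight M h \<Longrightarrow> 0 \<le> wh M h t"
  unfolding wh_def weight_def by (auto simp: less_imp_le)

lemma wh_meas:
  assumes w: "weight M h"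
  shows "wh M h \<in> borel_measurable borel"
proof -
  define hh where "hh t = (if t < 0 then wh M h 0 else wh M h t)" for t
  have am: "hh y \<le> hh x" if "x \<le> y" for x y
  proof -
    have A: "wh M h y \<le> wh M h x" if "0 \<le> x" "x \<le> y" for x y
    proof (cases "y \<in> wdom M")
      case True
      then have "x \<in> wdom M" using wdom_down that by blast
      then show ?thesis using True that w unfolding wh_def weight_def by auto
    next
      case False then show ?thesis using wh_nonneg[OF w, of x] by (simp add: wh_def)
    qed
    show ?thesis using that A[of x y] A[of 0 y] unfolding hh_def by auto
  qed
  have "hh \<in> borel_measurable borel"
    by (rule antimono_borel) (rule am)
  moreover have "wh M h = (\<lambda>t. (if 0 \<le> t then 1 else 0) * hh t)"
    by (rule ext) (auto simp: hh_def wh_def wdom_def)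
  ultimately show ?thesis by simp
qed

lemma layer_cake:
  assumes o: "orlicz_function \<phi>" and w: "weight M h" and g: "g \<in> borel_measurable M"
  shows "modular \<phi> h M g =
    (\<integral>\<^sup>+ s. indicator {0..} s * Wf M h (distr_fun M g (phi_inv \<phi> s)) \<partial>lborel)"
proof -
  define D where "D s = distr_fun M g (phi_inv \<phi> (max s 0))" for s
  have Dam: "D y \<le> D x" if "x \<le> y" for x y
    unfolding D_def using that
    by (intro distr_fun_antimono[OF g] phi_inv_mono[OF o]) auto
  have Dm[measurable]: "D \<in> borel_measurable borel" by (rule antimono_borel) (rule Dam)
  have whm[measurable]: "wh M h \<in> borel_measurable borel" by (rule wh_meas[OF w])
  define G where "G t s = indicator {0..} s * indicator {t. ennreal t < D s} t * ennreal (wh M h t)" for t s :: real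
  have Gm: "case_prod G \<in> borel_measurable (lborel \<Otimes>\<^sub>M lborel)"
    unfolding G_def by measurable
  have "modular \<phi> h M g = (\<integral>\<^sup>+ t. phi_ext \<phi> (rearr M g t) * ennreal (wh M h t) \<partial>lborel)"
    unfolding modular_def
    by (intro nn_integral_cong) (auto simp: wh_def indicator_def)
  also have "\<dots> = (\<integral>\<^sup>+ t. (\<integral>\<^sup>+ s. G t s \<partial>lborel) \<partial>lborel)"
  proof (intro nn_integral_cong)
    fix t :: real
    show "phi_ext \<phi> (rearr M g t) * ennreal (wh M h t) = (\<integral>\<^sup>+ s. G t s \<partial>lborel)"
    proof (cases "t \<in> wdom M")
      case False
      then show ?thesis by (simp add: G_def wh_def)
    next
      case True
      then have t: "0 \<le> t" by (simp add: wdom_def)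
      have "phi_ext \<phi> (rearr M g t) = emeasure lborel {s::real. 0 \<le> s \<and> ennreal s < phi_ext \<phi> (rearr M g t)}"
        by (simp add: emeasure_lborel_below)
      also have "\<dots> = (\<integral>\<^sup>+ s. indicator {s::real. 0 \<le> s \<and> ennreal s < phi_ext \<phi> (rearr M g t)} s \<partial>lborel)"
      proof -
        have "{s::real. 0 \<le> s \<and> ennreal s < phi_ext \<phi> (rearr M g t)} = {s. 0 \<le> s \<and> ennreal t < D s}"
          using key_iff[OF o g _ t] by (auto simp: D_def)
        moreover have "{s. 0 \<le> s \<and> ennreal t < D s} \<in> sets lborel" by measurable
        ultimately show ?thesis by simp
      qed
      also have "\<dots> = (\<integral>\<^sup>+ s. indicator {0..} s * indicator {t. ennreal t < D s} t \<partial>lborel)"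
        using key_iff[OF o g _ t] by (intro nn_integral_cong) (auto simp: D_def indicator_def)
      finally show ?thesis unfolding G_def
        by (simp add: nn_integral_multc[symmetric])
    qed
  qed
  also have "\<dots> = (\<integral>\<^sup>+ s. (\<integral>\<^sup>+ t. G t s \<partial>lborel) \<partial>lborel)"
    using lborel_pair.Fubini'[OF Gm] by simp
  also have "\<dots> = (\<integral>\<^sup>+ s. indicator {0..} s * Wf M h (distr_fun M g (phi_inv \<phi> s)) \<partial>lborel)"
  proof (intro nn_integral_cong)
    fix s :: real
    show "(\<integral>\<^sup>+ t. G t s \<partial>lborel) = indicator {0..} s * Wf M h (distr_fun M g (phi_inv \<phi> s))"
    proof (cases "0 \<le> s")
      case False then show ?thesis by (simp add: G_def)
    next
      case True
      have "(\<integral>\<^sup>+ t. G t s \<partial>lborel) = (\<integral>\<^sup>+ t. ennreal (wh M h t) * indicator {t. ennreal t < D s} t \<partial>lborel)"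
        using True by (intro nn_integral_cong) (simp add: G_def mult.commute)
      then show ?thesis using True by (simp add: Wf_def D_def)
    qed
  qed
  finally show ?thesis .
qed

lemma Wf_mono: "m \<le> m' \<Longrightarrow> Wf M h m \<le> Wf M h m'"
  unfolding Wf_def
  by (intro nn_integral_mono) (auto simp: indicator_def intro: less_le_trans)

lemma Wf_zero: "Wf M h 0 = 0"
  unfolding Wf_def by simp

lemma Wf_scale:
  assumes w: "weight M h" and a: "1 \<le> a"
  shows "Wf M h (ennreal a * m) \<le> ennreal a * Wf M h m"
proof -
  have [measurable]: "wh M h \<in> borel_measurable borel" by (rule wh_meas[OF w])
  let ?f = "\<lambda>t. ennreal (wh M h t) * indicator {t. ennreal t < ennreal a * m} t"
  have fm: "?f \<in> borel_measurable borel" by measurable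
  have "Wf M h (ennreal a * m) = ennreal \<bar>a\<bar> * (\<integral>\<^sup>+ x. ?f (0 + a * x) \<partial>lborel)"
    unfolding Wf_def using nn_integral_real_affine[OF fm, of a 0] a by simp
  also have "\<dots> \<le> ennreal a * (\<integral>\<^sup>+ x. ennreal (wh M h x) * indicator {t. ennreal t < m} x \<partial>lborel)"
  proof -
    have "?f (0 + a * x) \<le> ennreal (wh M h x) * indicator {t. ennreal t < m} x" for x
    proof (cases "a * x \<in> wdom M \<and> ennreal (a * x) < ennreal a * m")
      case True
      then have ax: "0 \<le> a * x" by (simp add: wdom_def)
      then have x0: "0 \<le> x" using a by (simp add: zero_le_mult_iff)
      have xax: "x \<le> a * x" using a x0 by (simp add: mult_le_cancel_right1)
      then have xw: "x \<in> wdom M" using wdom_down True x0 by blast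
      have hle: "h (a * x) \<le> h x" using w True xw xax unfolding weight_def by auto
      have "ennreal x < m"
      proof (rule ccontr)
        assume "\<not> ennreal x < m"
        then have "ennreal a * m \<le> ennreal a * ennreal x" by (simp add: mult_left_mono)
        then show False using True x0 a by (simp add: ennreal_mult leD)
      qed
      then show ?thesis using True xw hle by (simp add: wh_def ennreal_leI)
    next
      case False
      then show ?thesis by (auto simp: wh_def indicator_def)
    qed
    then have "(\<integral>\<^sup>+ x. ?f (0 + a * x) \<partial>lborel) \<le> (\<integral>\<^sup>+ x. ennreal (wh M h x) * indicator {t. ennreal t < m} x \<partial>lborel)"
      by (intro nn_integral_mono) auto
    then show ?thesis using a by (simp add: mult_left_mono)
  qed
  finally show ?thesis unfolding Wf_def .
qed

lemma Wf_real:
  assumes w: "weight M h" and m: "0 \<le> m" and mX: "ennreal m \<le> emeasure M (space M)"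
  shows "Wf M h (ennreal m) = ennreal (Wint h m)"
proof (cases "m = 0")
  case True then show ?thesis by (simp add: Wf_def Wint_def set_lebesgue_integral_def)
next
  case False
  then have m0: "0 < m" using m by simp
  have [measurable]: "wh M h \<in> borel_measurable borel" by (rule wh_meas[OF w])
  have inw: "t \<in> wdom M" if "0 \<le> t" "t < m" for t
    using that mX unfolding wdom_def
    by (auto intro: less_le_trans[of _ "ennreal m"] simp: ennreal_less_iff)
  have 0: "0 \<in> wdom M" using inw m0 by simp
  define f where "f t = indicator {0..<m} t * wh M h t" for t
  have feq: "f t = indicator {0..<m} t * h t" for t
    using inw by (auto simp: f_def wh_def indicator_def)
  have fm[measurable]: "f \<in> borel_measurable borel" unfolding f_def by measurable
  have bound: "norm (f t) \<le> h 0 * indicator {0..<m} t" for t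
  proof (cases "0 \<le> t \<and> t < m")
    case True
    then have "0 < h t" "h t \<le> h 0" using w inw[of t] 0 unfolding weight_def by auto
    then show ?thesis using True by (simp add: feq)
  qed (auto simp: feq indicator_def)
  have i1: "integrable lborel (\<lambda>t. h 0 * indicator {0..<m} t :: real)"
    using m by (intro integrable_mult_right integrable_real_indicator) auto
  have h0: "0 < h 0" using 0 w unfolding weight_def by auto
  have "norm (f t) \<le> norm (h 0 * indicator {0..<m} t :: real)" for t
    using bound[of t] h0 by (simp add: indicator_def)
  then have "AE t in lborel. norm (f t) \<le> norm (h 0 * indicator {0..<m} t :: real)"
    by (intro AE_I2)
  moreover have "f \<in> borel_measurable lborel" by measurable
  ultimately have int: "integrable lborel f"
    using Bochner_Integration.integrable_bound[OF i1] by blast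
  have "Wf M h (ennreal m) = (\<integral>\<^sup>+ t. ennreal (f t) \<partial>lborel)"
    unfolding Wf_def
    by (intro nn_integral_cong) (auto simp: f_def indicator_def ennreal_less_iff wh_def wdom_def)
  also have "\<dots> = ennreal (integral\<^sup>L lborel f)"
    by (rule nn_integral_eq_integral[OF int]) (auto simp: f_def wh_nonneg[OF w])
  also have "integral\<^sup>L lborel f = Wint h m"
    unfolding Wint_def set_lebesgue_integral_def by (simp add: feq[abs_def] mult.commute)
  finally show ?thesis .
qed

lemma Wf_real_pos:
  assumes w: "weight M h" and m: "0 < m" and mX: "ennreal m \<le> emeasure M (space M)"
  shows "0 < Wint h m"
proof -
  have inw: "t \<in> wdom M" if "0 \<le> t" "t < m" for t
    using that mX unfolding wdom_def
    by (auto intro: less_le_trans[of _ "ennreal m"] simp: ennreal_less_iff)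
  have hm: "0 < h (m/2)" using w inw[of "m/2"] m unfolding weight_def by auto
  have "ennreal (h (m/2)) * ennreal (m/2) = (\<integral>\<^sup>+ t. ennreal (h (m/2)) * indicator {0..m/2} t \<partial>lborel)"
    using m by (simp add: nn_integral_cmult)
  also have "\<dots> \<le> Wf M h (ennreal m)"
    unfolding Wf_def
  proof (intro nn_integral_mono)
    fix t
    show "ennreal (h (m/2)) * indicator {0..m/2} t \<le> ennreal (wh M h t) * indicator {t. ennreal t < ennreal m} t"
    proof (cases "0 \<le> t \<and> t \<le> m/2")
      case True
      then have "h (m/2) \<le> h t" using w inw[of t] inw[of "m/2"] m unfolding weight_def by auto
      then show ?thesis using True inw[of t] m by (auto simp: wh_def ennreal_less_iff ennreal_leI)
    qed auto
  qed
  also have "\<dots> = ennreal (Wint h m)" using Wf_real[OF w _ mX] m by simp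
  finally have le: "ennreal (h (m/2)) * ennreal (m/2) \<le> ennreal (Wint h m)" .
  have "0 < ennreal (h (m/2)) * ennreal (m/2)"
    using hm m by (simp add: ennreal_mult[symmetric])
  then have "0 < ennreal (Wint h m)" using le by (rule less_le_trans)
  then show ?thesis by (simp add: ennreal_less_zero_iff)
qed

lemma modular_alt:
  "modular \<phi> h M g = (\<integral>\<^sup>+ t. phi_ext \<phi> (rearr M g t) * ennreal (wh M h t) \<partial>lborel)"
  unfolding modular_def by (intro nn_integral_cong) (auto simp: wh_def indicator_def)

lemma modint_meas:
  assumes o: "orlicz_function \<phi>" and w: "weight M h"
  shows "(\<lambda>t. phi_ext \<phi> (rearr M g t) * ennreal (wh M h t)) \<in> borel_measurable lborel"
proof -
  have [measurable]: "(\<lambda>t. phi_ext \<phi> (rearr M g t)) \<in> borel_measurable borel"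
    by (rule antimono_borel) (intro phi_ext_mono[OF o] rearr_antimono)
  have [measurable]: "wh M h \<in> borel_measurable borel" by (rule wh_meas[OF w])
  show ?thesis by measurable
qed

lemma distr_fun_scale:
  assumes c: "0 < c"
  shows "distr_fun M (\<lambda>x. c * g x) d = distr_fun M g (d / c)"
proof -
  have "{x \<in> space M. d < \<bar>c * g x\<bar>} = {x \<in> space M. d / c < \<bar>g x\<bar>}"
    using c by (auto simp: abs_mult divide_less_eq mult.commute)
  then show ?thesis unfolding distr_fun_def by simp
qed

lemma rearr_scale_ge:
  assumes c: "0 < c"
  shows "ennreal c * rearr M g t \<le> rearr M (\<lambda>x. c * g x) t"
  unfolding rearr_def
proof (rule INF_greatest)
  fix d assume d: "d \<in> {d. 0 < d \<and> distr_fun M (\<lambda>x. c * g x) d \<le> ennreal t}"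
  then have "d / c \<in> {e. 0 < e \<and> distr_fun M g e \<le> ennreal t}"
    using c by (simp add: distr_fun_scale)
  then have "(INF e\<in>{e. 0 < e \<and> distr_fun M g e \<le> ennreal t}. ennreal e) \<le> ennreal (d / c)"
    by (rule INF_lower)
  then have "ennreal c * (INF e\<in>{e. 0 < e \<and> distr_fun M g e \<le> ennreal t}. ennreal e) \<le> ennreal c * ennreal (d / c)"
    by (rule mult_left_mono) simp
  also have "\<dots> = ennreal d" using c d by (simp add: ennreal_mult[symmetric])
  finally show "ennreal c * (INF e\<in>{e. 0 < e \<and> distr_fun M g e \<le> ennreal t}. ennreal e) \<le> ennreal d" .
qed

lemma rearr_scale:
  assumes c: "0 < c"
  shows "rearr M (\<lambda>x. c * g x) t = ennreal c * rearr M g t"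
proof (rule antisym)
  have "ennreal (1/c) * rearr M (\<lambda>x. c * g x) t \<le> rearr M (\<lambda>x. (1/c) * (c * g x)) t"
    using c by (intro rearr_scale_ge) simp
  also have "(\<lambda>x. (1/c) * (c * g x)) = g" using c by (simp add: field_simps)
  finally have "ennreal (1/c) * rearr M (\<lambda>x. c * g x) t \<le> rearr M g t" .
  then have "ennreal c * (ennreal (1/c) * rearr M (\<lambda>x. c * g x) t) \<le> ennreal c * rearr M g t"
    by (rule mult_left_mono) simp
  moreover have "ennreal c * (ennreal (1/c) * rearr M (\<lambda>x. c * g x) t) = rearr M (\<lambda>x. c * g x) t"
    using c by (simp add: mult.assoc[symmetric] ennreal_mult[symmetric])
  ultimately show "rearr M (\<lambda>x. c * g x) t \<le> ennreal c * rearr M g t" by simp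
qed (rule rearr_scale_ge[OF c])

lemma mod_scale_down:
  assumes o: "orlicz_function \<phi>" and w: "weight M h" and a: "0 < a" "a \<le> 1"
  shows "modular \<phi> h M (\<lambda>x. a * g x) \<le> ennreal a * modular \<phi> h M g"
proof -
  have pt: "phi_ext \<phi> (ennreal a * r) \<le> ennreal a * phi_ext \<phi> r" for r
  proof (cases r)
    case (real r')
    then have "phi_ext \<phi> (ennreal a * r) = ennreal (\<phi> (a * r'))"
      using a by (simp add: phi_ext_def ennreal_mult[symmetric])
    also have "\<dots> \<le> ennreal (a * \<phi> r')"
      using orl_convex_scale[OF o, of a r'] a real by (simp add: ennreal_leI)
    also have "\<dots> = ennreal a * phi_ext \<phi> r"
      using a real orl_nonneg[OF o, of r'] by (simp add: phi_ext_def ennreal_mult)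
    finally show ?thesis .
  next
    case top then show ?thesis using a by (simp add: phi_ext_def ennreal_mult_top)
  qed
  have "modular \<phi> h M (\<lambda>x. a * g x) = (\<integral>\<^sup>+ t. phi_ext \<phi> (ennreal a * rearr M g t) * ennreal (wh M h t) \<partial>lborel)"
    unfolding modular_alt rearr_scale[OF a(1)] ..
  also have "\<dots> \<le> (\<integral>\<^sup>+ t. ennreal a * (phi_ext \<phi> (rearr M g t) * ennreal (wh M h t)) \<partial>lborel)"
    by (intro nn_integral_mono) (simp add: mult.assoc[symmetric] mult_right_mono pt)
  also have "\<dots> = ennreal a * modular \<phi> h M g"
    unfolding modular_alt by (rule nn_integral_cmult) (rule modint_meas[OF o w])
  finally show ?thesis .
qed

lemma mod_double:
  assumes o: "orlicz_function \<phi>" and w: "weight M h" and K: "0 < K" "\<forall>s>0. \<phi> (2 * s) \<le> K * \<phi> s"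
  shows "modular \<phi> h M (\<lambda>x. 2 * g x) \<le> ennreal K * modular \<phi> h M g"
proof -
  have pt: "phi_ext \<phi> (ennreal 2 * r) \<le> ennreal K * phi_ext \<phi> r" for r
  proof (cases r)
    case (real r')
    have "\<phi> (2 * r') \<le> K * \<phi> r'"
    proof (cases "r' = 0")
      case True then show ?thesis using orl_zero[OF o] by simp
    next
      case False then show ?thesis using K real by simp
    qed
    then show ?thesis using real K orl_nonneg[OF o, of r']
      by (simp add: phi_ext_def ennreal_mult[symmetric] ennreal_leI del: ennreal_numeral)
  next
    case top then show ?thesis using K by (simp add: phi_ext_def ennreal_mult_top)
  qed
  have "modular \<phi> h M (\<lambda>x. 2 * g x) = (\<integral>\<^sup>+ t. phi_ext \<phi> (ennreal 2 * rearr M g t) * ennreal (wh M h t) \<partial>lborel)"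
    unfolding modular_alt rearr_scale[of 2, simplified] by simp
  also have "\<dots> \<le> (\<integral>\<^sup>+ t. ennreal K * (phi_ext \<phi> (rearr M g t) * ennreal (wh M h t)) \<partial>lborel)"
    by (intro nn_integral_mono) (simp add: mult.assoc[symmetric] mult_right_mono pt del: ennreal_numeral)
  also have "\<dots> = ennreal K * modular \<phi> h M g"
    unfolding modular_alt by (rule nn_integral_cmult) (rule modint_meas[OF o w])
  finally show ?thesis .
qed

lemma mod_mono:
  assumes o: "orlicz_function \<phi>" and g2: "g2 \<in> borel_measurable M"
    and le: "\<And>x. x \<in> space M \<Longrightarrow> \<bar>g1 x\<bar> \<le> \<bar>g2 x\<bar>"
  shows "modular \<phi> h M g1 \<le> modular \<phi> h M g2"
proof -
  have d: "distr_fun M g1 c \<le> distr_fun M g2 c" for c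
    unfolding distr_fun_def using g2 le by (intro emeasure_mono) (auto intro: less_le_trans)
  have r: "rearr M g1 t \<le> rearr M g2 t" for t
    unfolding rearr_def by (rule INF_superset_mono) (auto intro: order_trans[OF d])
  show ?thesis unfolding modular_def
    by (intro nn_integral_mono mult_right_mono phi_ext_mono[OF o] r) auto
qed

lemma distr_fun_cong:
  assumes "\<And>x. x \<in> space M \<Longrightarrow> \<bar>g1 x\<bar> = \<bar>g2 x\<bar>"
  shows "distr_fun M g1 = distr_fun M g2"
  unfolding distr_fun_def using assms by (intro ext arg_cong[where f="emeasure M"]) auto

lemma OL_norm_cong:
  assumes "\<And>x. x \<in> space M \<Longrightarrow> \<bar>g1 x\<bar> = \<bar>g2 x\<bar>"
  shows "OL_norm \<phi> h M g1 = OL_norm \<phi> h M g2"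
proof -
  have "modular \<phi> h M (\<lambda>x. g1 x / c) = modular \<phi> h M (\<lambda>x. g2 x / c)" for c
  proof -
    have "distr_fun M (\<lambda>x. g1 x / c) = distr_fun M (\<lambda>x. g2 x / c)"
      using assms by (intro distr_fun_cong) (simp add: abs_divide)
    then show ?thesis unfolding modular_def rearr_def by simp
  qed
  then show ?thesis unfolding OL_norm_def by simp
qed


lemma mod_finite_scale:
  assumes o: "orlicz_function \<phi>" and w: "weight M h" and K: "0 < K" "\<forall>s>0. \<phi> (2 * s) \<le> K * \<phi> s"
    and c: "0 < c" "modular \<phi> h M (\<lambda>x. c * g x) < \<infinity>" and d: "0 < d"
  shows "modular \<phi> h M (\<lambda>x. d * g x) < \<infinity>"
proof -
  have j: "modular \<phi> h M (\<lambda>x. (2^j * c) * g x) < \<infinity>" for j :: nat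
  proof (induction j)
    case 0 then show ?case using c by simp
  next
    case (Suc j)
    have "modular \<phi> h M (\<lambda>x. (2^Suc j * c) * g x) = modular \<phi> h M (\<lambda>x. 2 * ((2^j * c) * g x))"
      by (simp add: mult.assoc)
    also have "\<dots> \<le> ennreal K * modular \<phi> h M (\<lambda>x. (2^j * c) * g x)"
      by (rule mod_double[OF o w K])
    also have "\<dots> < \<infinity>" using Suc by (simp add: ennreal_mult_less_top)
    finally show ?case .
  qed
  obtain j :: nat where "d / c < 2 ^ j" using real_arch_pow[of 2 "d/c"] by auto
  then have dj: "d \<le> 2^j * c" using c by (simp add: divide_less_eq mult.commute less_imp_le)
  define a where "a = d / (2^j * c)"
  have a: "0 < a" "a \<le> 1" using d c dj by (auto simp: a_def)
  have "modular \<phi> h M (\<lambda>x. d * g x) = modular \<phi> h M (\<lambda>x. a * ((2^j * c) * g x))"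
    using c by (simp add: a_def mult.assoc[symmetric])
  also have "\<dots> \<le> ennreal a * modular \<phi> h M (\<lambda>x. (2^j * c) * g x)"
    by (rule mod_scale_down[OF o w a])
  also have "\<dots> < \<infinity>" using j[of j] by (simp add: ennreal_mult_less_top)
  finally show ?thesis .
qed

lemma norm_big:
  assumes o: "orlicz_function \<phi>" and w: "weight M h" and K: "0 < K" "\<forall>s>0. \<phi> (2 * s) \<le> K * \<phi> s"
    and g: "g \<in> borel_measurable M" and c: "0 < c" "modular \<phi> h M (\<lambda>x. c * g x) < \<infinity>"
    and big: "ennreal K < modular \<phi> h M g"
  shows "2 \<le> OL_norm \<phi> h M g"
proof (rule ccontr)
  define S where "S = {c::real. 0 < c \<and> modular \<phi> h M (\<lambda>x. g x / c) \<le> 1}"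
  assume "\<not> 2 \<le> OL_norm \<phi> h M g"
  then have lt: "Inf S < 2" unfolding OL_norm_def S_def by simp
  obtain B where B: "modular \<phi> h M (\<lambda>x. 1 * g x) = ennreal B" "0 \<le> B"
    using mod_finite_scale[OF o w K c, of 1] by (cases "modular \<phi> h M (\<lambda>x. 1 * g x)") auto
  define a where "a = 1 / (B + 1)"
  have a: "0 < a" "a \<le> 1" using B by (auto simp: a_def)
  have "modular \<phi> h M (\<lambda>x. a * (1 * g x)) \<le> ennreal a * ennreal B"
    using mod_scale_down[OF o w a, of "\<lambda>x. 1 * g x"] B by simp
  also have "\<dots> \<le> 1" using B by (simp add: a_def ennreal_mult[symmetric] divide_le_eq_1)
  finally have "modular \<phi> h M (\<lambda>x. g x / (1 / a)) \<le> 1" by (simp add: mult.commute)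
  then have "1 / a \<in> S" using a unfolding S_def by simp
  then have ne: "S \<noteq> {}" by auto
  have bdd: "bdd_below S" unfolding S_def by (rule bdd_belowI[of _ 0]) auto
  obtain d where d: "d \<in> S" "d < 2" using cInf_less_iff[OF ne bdd] lt by auto
  have "modular \<phi> h M g = modular \<phi> h M (\<lambda>x. 2 * (g x / 2))" by simp
  also have "\<dots> \<le> ennreal K * modular \<phi> h M (\<lambda>x. g x / 2)" by (rule mod_double[OF o w K])
  also have "\<dots> \<le> ennreal K * modular \<phi> h M (\<lambda>x. g x / d)"
  proof (rule mult_left_mono)
    show "modular \<phi> h M (\<lambda>x. g x / 2) \<le> modular \<phi> h M (\<lambda>x. g x / d)"
    proof (rule mod_mono[OF o])
      show "(\<lambda>x. g x / d) \<in> borel_measurable M" using g by measurable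
      fix x
      have "\<bar>g x\<bar> / 2 \<le> \<bar>g x\<bar> / d" using d unfolding S_def by (intro divide_left_mono) auto
      moreover have "\<bar>d\<bar> = d" using d unfolding S_def by simp
      ultimately show "\<bar>g x / 2\<bar> \<le> \<bar>g x / d\<bar>" by (simp add: abs_divide)
    qed
  qed simp
  also have "\<dots> \<le> ennreal K * 1" using d unfolding S_def by (intro mult_left_mono) auto
  also have "\<dots> = ennreal K" by simp
  finally show False using big by simp
qed

lemma norm_unit:
  assumes o: "orlicz_function \<phi>" and w: "weight M h" and K: "0 < K" "\<forall>s>0. \<phi> (2 * s) \<le> K * \<phi> s"
    and n: "OL_norm \<phi> h M g = 1"
  shows "1 < ennreal K * modular \<phi> h M g"
proof -
  define S where "S = {c::real. 0 < c \<and> modular \<phi> h M (\<lambda>x. g x / c) \<le> 1}"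
  have bdd: "bdd_below S" unfolding S_def by (rule bdd_belowI[of _ 0]) auto
  have "1/2 \<notin> S"
  proof
    assume "1/2 \<in> S"
    then have "Inf S \<le> 1/2" using cInf_lower[OF _ bdd] by blast
    then show False using n unfolding OL_norm_def S_def by simp
  qed
  then have "1 < modular \<phi> h M (\<lambda>x. 2 * g x)" unfolding S_def by (simp add: mult.commute)
  also have "\<dots> \<le> ennreal K * modular \<phi> h M g" by (rule mod_double[OF o w K])
  finally show ?thesis .
qed

lemma mod_indicator:
  assumes o: "orlicz_function \<phi>" and w: "weight M h" and a: "0 < a" and A: "A \<in> sets M"
  shows "modular \<phi> h M (\<lambda>x. a * indicator A x) = ennreal (\<phi> a) * Wf M h (emeasure M A)"
proof -
  have gm: "(\<lambda>x. a * indicator A x :: real) \<in> borel_measurable M" using A by measurable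
  have D: "distr_fun M (\<lambda>x. a * indicator A x) (phi_inv \<phi> s) = (if s < \<phi> a then emeasure M A else 0)"
    if s: "0 \<le> s" for s
  proof -
    have l0: "0 \<le> phi_inv \<phi> s" by (rule phi_inv(1)[OF o s])
    have iff: "s < \<phi> a \<longleftrightarrow> phi_inv \<phi> s < a" using phi_less_iff[OF o _ s, of a] a by simp
    have "{x \<in> space M. phi_inv \<phi> s < \<bar>a * indicator A x\<bar>} = (if s < \<phi> a then A else {})"
      using iff l0 a sets.sets_into_space[OF A] by (auto simp: indicator_def)
    then show ?thesis unfolding distr_fun_def by simp
  qed
  have "modular \<phi> h M (\<lambda>x. a * indicator A x) =
      (\<integral>\<^sup>+ s. Wf M h (emeasure M A) * indicator {0..<\<phi> a} s \<partial>lborel)"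
    unfolding layer_cake[OF o w gm]
  proof (intro nn_integral_cong)
    fix s :: real
    show "indicator {0..} s * Wf M h (distr_fun M (\<lambda>x. a * indicator A x) (phi_inv \<phi> s)) =
        Wf M h (emeasure M A) * indicator {0..<\<phi> a} s"
    proof (cases "0 \<le> s")
      case True then show ?thesis unfolding D[OF True] by (auto simp: Wf_zero)
    qed simp
  qed
  also have "\<dots> = Wf M h (emeasure M A) * ennreal (\<phi> a)"
    using orl_nonneg[OF o, of a] a by (simp add: nn_integral_cmult_indicator)
  finally show ?thesis by (simp add: mult.commute)
qed

lemma Aplus_facts:
  assumes A: "A \<in> Aplus M"
  shows "A \<in> sets M" "0 < measure M A" "emeasure M A = ennreal (measure M A)"
    "ennreal (measure M A) \<le> emeasure M (space M)"
proof -
  have A1: "A \<in> sets M" and A2: "0 < emeasure M A" and A3: "emeasure M A < \<infinity>"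
    using A unfolding Aplus_def by auto
  show "A \<in> sets M" by (rule A1)
  have fin: "emeasure M A \<noteq> \<infinity>" using A3 by simp
  show eq: "emeasure M A = ennreal (measure M A)" using fin emeasure_eq_ennreal_measure[of M A] by auto
  have "0 < ennreal (measure M A)" using A2 eq by simp
  then show "0 < measure M A" by (simp add: ennreal_less_zero_iff)
  have "emeasure M A \<le> emeasure M (space M)" by (rule emeasure_space)
  then show "ennreal (measure M A) \<le> emeasure M (space M)" using eq by simp
qed

lemma Wint_pos_Aplus:
  assumes w: "weight M h" and A: "A \<in> Aplus M"
  shows "0 < Wint h (measure M A)"
  using Wf_real_pos[OF w Aplus_facts(2,4)[OF A]] .

lemma fund_pos:
  assumes o: "orlicz_function \<phi>" and w: "weight M h" and A: "A \<in> Aplus M"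
  shows "0 < fund \<phi> h M A"
  unfolding fund_def using Wint_pos_Aplus[OF w A] by (intro phi_inv_pos[OF o]) simp

lemma ind_norm:
  assumes o: "orlicz_function \<phi>" and w: "weight M h" and A: "A \<in> Aplus M" and a: "0 < a"
  shows "(\<lambda>x. a * indicator A x) \<in> OL_space \<phi> h M"
    "OL_norm \<phi> h M (\<lambda>x. a * indicator A x) = a / fund \<phi> h M A"
proof -
  note AF = Aplus_facts[OF A]
  define W where "W = Wint h (measure M A)"
  have W: "0 < W" using Wint_pos_Aplus[OF w A] by (simp add: W_def)
  have Wf: "Wf M h (emeasure M A) = ennreal W"
    unfolding W_def AF(3) by (rule Wf_real[OF w _ AF(4)]) simp
  have md: "modular \<phi> h M (\<lambda>x. b * indicator A x) = ennreal (\<phi> b * W)" if "0 < b" for b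
    using mod_indicator[OF o w that AF(1)] Wf orl_nonneg[OF o, of b] that W
    by (simp add: ennreal_mult)
  show "(\<lambda>x. a * indicator A x) \<in> OL_space \<phi> h M"
    unfolding OL_space_def using AF(1) md[of a] a
    by (auto intro!: exI[of _ 1])
  define f where "f = fund \<phi> h M A"
  have f: "0 < f" using fund_pos[OF o w A] by (simp add: f_def)
  have "{c. 0 < c \<and> modular \<phi> h M (\<lambda>x. a * indicator A x / c) \<le> 1} = {a / f..}"
  proof (intro set_eqI iffI)
    fix c assume c: "c \<in> {c. 0 < c \<and> modular \<phi> h M (\<lambda>x. a * indicator A x / c) \<le> 1}"
    then have c0: "0 < c" by simp
    have "(\<lambda>x. a * indicator A x / c) = (\<lambda>x. (a / c) * indicator A x)" by auto
    then have "\<phi> (a / c) * W \<le> 1" using c md[of "a/c"] c0 a by simp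
    then have "\<phi> (a / c) \<le> 1 / W" using W by (simp add: le_divide_eq)
    then have "a / c \<le> f" unfolding f_def fund_def W_def[symmetric]
      using phi_le_iff[OF o, of "a/c" "1/W"] c0 a W by simp
    then show "c \<in> {a / f..}" using f c0 by (simp add: divide_le_eq mult.commute)
  next
    fix c assume c: "c \<in> {a / f..}"
    then have c0: "0 < c" using a f by (auto intro: less_le_trans[of 0 "a/f"])
    have "a / c \<le> f" using c c0 f by (simp add: divide_le_eq mult.commute)
    then have "\<phi> (a / c) \<le> 1 / W" unfolding f_def fund_def W_def[symmetric]
      using phi_le_iff[OF o, of "a/c" "1/W"] c0 a W by simp
    then have "\<phi> (a / c) * W \<le> 1" using W by (simp add: le_divide_eq)
    moreover have "(\<lambda>x. a * indicator A x / c) = (\<lambda>x. (a / c) * indicator A x)" by auto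
    ultimately show "c \<in> {c. 0 < c \<and> modular \<phi> h M (\<lambda>x. a * indicator A x / c) \<le> 1}"
      using md[of "a/c"] c0 a by simp
  qed
  then show "OL_norm \<phi> h M (\<lambda>x. a * indicator A x) = a / fund \<phi> h M A"
    unfolding OL_norm_def f_def by simp
qed


context
  fixes M :: "'a measure" and \<tau> :: "'a \<Rightarrow> 'a"
  assumes bij: "bij_betw \<tau> (space M) (space M)"
begin

abbreviation "\<sigma> \<equiv> inv_into (space M) \<tau>"

lemma t_in: "x \<in> space M \<Longrightarrow> \<tau> x \<in> space M"
  using bij by (auto simp: bij_betw_def)

lemma s_in: "x \<in> space M \<Longrightarrow> \<sigma> x \<in> space M"
  using bij by (metis bij_betw_def inv_into_into)

lemma st: "x \<in> space M \<Longrightarrow> \<sigma> (\<tau> x) = x"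
  using bij by (simp add: bij_betw_def inv_into_f_f)

lemma ts: "x \<in> space M \<Longrightarrow> \<tau> (\<sigma> x) = x"
  using bij by (metis bij_betw_def f_inv_into_f)

lemma tn_in: "x \<in> space M \<Longrightarrow> (\<tau> ^^ n) x \<in> space M"
  by (induction n) (auto simp: t_in)

lemma sn_in: "x \<in> space M \<Longrightarrow> (\<sigma> ^^ n) x \<in> space M"
  by (induction n) (auto simp: s_in)

lemma snt: "x \<in> space M \<Longrightarrow> (\<sigma> ^^ n) ((\<tau> ^^ n) x) = x"
proof (induction n arbitrary: x)
  case (Suc n)
  have e: "(\<sigma> ^^ Suc n) = (\<sigma> ^^ n) \<circ> \<sigma>" by (rule funpow_Suc_right)
  have "(\<sigma> ^^ Suc n) ((\<tau> ^^ Suc n) x) = (\<sigma> ^^ n) (\<sigma> (\<tau> ((\<tau> ^^ n) x)))"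
    unfolding e by simp
  also have "\<dots> = (\<sigma> ^^ n) ((\<tau> ^^ n) x)" using st tn_in Suc.prems by simp
  finally show ?case using Suc by simp
qed simp

lemma tns: "x \<in> space M \<Longrightarrow> (\<tau> ^^ n) ((\<sigma> ^^ n) x) = x"
proof (induction n arbitrary: x)
  case (Suc n)
  have e: "(\<tau> ^^ Suc n) = (\<tau> ^^ n) \<circ> \<tau>" by (rule funpow_Suc_right)
  have "(\<tau> ^^ Suc n) ((\<sigma> ^^ Suc n) x) = (\<tau> ^^ n) (\<tau> (\<sigma> ((\<sigma> ^^ n) x)))"
    unfolding e by simp
  also have "\<dots> = (\<tau> ^^ n) ((\<sigma> ^^ n) x)" using ts sn_in Suc.prems by simp
  finally show ?case using Suc by simp
qed simp

lemma pre_t: "A \<subseteq> space M \<Longrightarrow> {x \<in> space M. (\<tau> ^^ n) x \<in> A} = (\<sigma> ^^ n) ` A"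
proof (intro set_eqI iffI)
  fix x assume "x \<in> {x \<in> space M. (\<tau> ^^ n) x \<in> A}"
  then show "x \<in> (\<sigma> ^^ n) ` A" using snt by (auto intro!: image_eqI[of _ _ "(\<tau> ^^ n) x"] simp: tns)
next
  fix x assume A: "A \<subseteq> space M" and "x \<in> (\<sigma> ^^ n) ` A"
  then obtain y where "y \<in> A" "x = (\<sigma> ^^ n) y" by auto
  then show "x \<in> {x \<in> space M. (\<tau> ^^ n) x \<in> A}" using A by (auto simp: tns sn_in)
qed

lemma pre_s: "A \<subseteq> space M \<Longrightarrow> {x \<in> space M. (\<sigma> ^^ n) x \<in> A} = (\<tau> ^^ n) ` A"
proof (intro set_eqI iffI)
  fix x assume "x \<in> {x \<in> space M. (\<sigma> ^^ n) x \<in> A}"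
  then show "x \<in> (\<tau> ^^ n) ` A" by (auto intro!: image_eqI[of _ _ "(\<sigma> ^^ n) x"] simp: tns)
next
  fix x assume A: "A \<subseteq> space M" and "x \<in> (\<tau> ^^ n) ` A"
  then obtain y where "y \<in> A" "x = (\<tau> ^^ n) y" by auto
  then show "x \<in> {x \<in> space M. (\<sigma> ^^ n) x \<in> A}" using A by (auto simp: snt tn_in)
qed

lemma st_img: "A \<subseteq> space M \<Longrightarrow> (\<sigma> ^^ n) ` (\<tau> ^^ n) ` A = A"
  by (force simp: image_image snt)

lemma ts_img: "A \<subseteq> space M \<Longrightarrow> (\<tau> ^^ n) ` (\<sigma> ^^ n) ` A = A"
  by (force simp: image_image tns)

lemma tn_meas: "\<tau> \<in> measurable M M \<Longrightarrow> (\<tau> ^^ n) \<in> measurable M M"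
  by (induction n) auto

lemma s_meas:
  assumes img: "\<forall>A\<in>sets M. \<tau> ` A \<in> sets M"
  shows "\<sigma> \<in> measurable M M"
proof (rule measurableI)
  show "x \<in> space M \<Longrightarrow> \<sigma> x \<in> space M" for x by (rule s_in)
  fix A assume A: "A \<in> sets M"
  have "\<sigma> -` A \<inter> space M = {x \<in> space M. (\<sigma> ^^ 1) x \<in> A}" by auto
  also have "\<dots> = (\<tau> ^^ 1) ` A" using pre_s sets.sets_into_space[OF A] by blast
  finally show "\<sigma> -` A \<inter> space M \<in> sets M" using img A by simp
qed

lemma sn_meas: "\<forall>A\<in>sets M. \<tau> ` A \<in> sets M \<Longrightarrow> (\<sigma> ^^ n) \<in> measurable M M"
  using s_meas by (induction n) auto

lemma img_Suc_t: "(\<tau> ^^ Suc n) ` A = \<tau> ` (\<tau> ^^ n) ` A"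
  by (simp add: image_comp)

lemma img_Suc_s: "(\<sigma> ^^ Suc n) ` A = \<sigma> ` (\<sigma> ^^ n) ` A"
  by (simp add: image_comp)

lemma tn_sub: "A \<subseteq> space M \<Longrightarrow> (\<tau> ^^ n) ` A \<subseteq> space M"
  using tn_in by auto

lemma sn_sub: "A \<subseteq> space M \<Longrightarrow> (\<sigma> ^^ n) ` A \<subseteq> space M"
  using sn_in by auto

lemma tn_sets:
  assumes img: "\<forall>A\<in>sets M. \<tau> ` A \<in> sets M" and A: "A \<in> sets M"
  shows "(\<tau> ^^ n) ` A \<in> sets M"
  by (induction n) (auto simp: img_Suc_t img A simp del: funpow.simps)

lemma sn_sets:
  assumes tm: "\<tau> \<in> measurable M M" and A: "A \<in> sets M"
  shows "(\<sigma> ^^ n) ` A \<in> sets M"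
proof -
  have "(\<sigma> ^^ n) ` A = {x \<in> space M. (\<tau> ^^ n) x \<in> A}"
    using pre_t sets.sets_into_space[OF A] by blast
  also have "\<dots> \<in> sets M" using tn_meas[OF tm] A by measurable
  finally show ?thesis .
qed

lemma tn_bound:
  assumes img: "\<forall>A\<in>sets M. \<tau> ` A \<in> sets M"
    and bd: "\<forall>A\<in>sets M. emeasure M (\<tau> ` A) \<le> ennreal c * emeasure M A" and c: "0 \<le> c"
    and A: "A \<in> sets M"
  shows "emeasure M ((\<tau> ^^ n) ` A) \<le> ennreal (c ^ n) * emeasure M A"
proof (induction n)
  case (Suc n)
  have "emeasure M ((\<tau> ^^ Suc n) ` A) \<le> ennreal c * emeasure M ((\<tau> ^^ n) ` A)"
    unfolding img_Suc_t using bd tn_sets[OF img A] by blast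
  also have "\<dots> \<le> ennreal c * (ennreal (c ^ n) * emeasure M A)"
    by (rule mult_left_mono[OF Suc]) simp
  also have "\<dots> = ennreal (c ^ Suc n) * emeasure M A"
    using c by (simp add: ennreal_mult mult.assoc)
  finally show ?case .
qed simp

lemma sn_bound:
  assumes tm: "\<tau> \<in> measurable M M"
    and bd: "\<forall>A\<in>sets M. emeasure M (\<tau> -` A \<inter> space M) \<le> ennreal c * emeasure M A" and c: "0 \<le> c"
    and A: "A \<in> sets M"
  shows "emeasure M ((\<sigma> ^^ n) ` A) \<le> ennreal (c ^ n) * emeasure M A"
proof (induction n)
  case (Suc n)
  have B: "(\<sigma> ^^ n) ` A \<in> sets M" by (rule sn_sets[OF tm A])
  have "\<sigma> ` ((\<sigma> ^^ n) ` A) = (\<sigma> ^^ 1) ` ((\<sigma> ^^ n) ` A)" by simp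
  also have "\<dots> = {x \<in> space M. (\<tau> ^^ 1) x \<in> (\<sigma> ^^ n) ` A}"
    using pre_t[of "(\<sigma> ^^ n) ` A" 1] sets.sets_into_space[OF B] by simp
  also have "\<dots> = \<tau> -` ((\<sigma> ^^ n) ` A) \<inter> space M" by auto
  finally have eq: "\<sigma> ` ((\<sigma> ^^ n) ` A) = \<tau> -` ((\<sigma> ^^ n) ` A) \<inter> space M" .
  have "emeasure M ((\<sigma> ^^ Suc n) ` A) \<le> ennreal c * emeasure M ((\<sigma> ^^ n) ` A)"
    unfolding img_Suc_s eq using bd B by blast
  also have "\<dots> \<le> ennreal c * (ennreal (c ^ n) * emeasure M A)"
    by (rule mult_left_mono[OF Suc]) simp
  also have "\<dots> = ennreal (c ^ Suc n) * emeasure M A"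
    using c by (simp add: ennreal_mult mult.assoc)
  finally show ?case .
qed simp

lemma distr_comp_t:
  assumes g: "g \<in> borel_measurable M"
  shows "distr_fun M (g \<circ> (\<tau> ^^ n)) l = emeasure M ((\<sigma> ^^ n) ` {x \<in> space M. l < \<bar>g x\<bar>})"
proof -
  have "{x \<in> space M. l < \<bar>(g \<circ> (\<tau> ^^ n)) x\<bar>} = {x \<in> space M. (\<tau> ^^ n) x \<in> {x \<in> space M. l < \<bar>g x\<bar>}}"
    using tn_in by auto
  also have "\<dots> = (\<sigma> ^^ n) ` {x \<in> space M. l < \<bar>g x\<bar>}" by (rule pre_t) auto
  finally show ?thesis unfolding distr_fun_def by simp
qed

lemma distr_comp_s:
  assumes g: "g \<in> borel_measurable M"
  shows "distr_fun M (g \<circ> (\<sigma> ^^ n)) l = emeasure M ((\<tau> ^^ n) ` {x \<in> space M. l < \<bar>g x\<bar>})"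
proof -
  have "{x \<in> space M. l < \<bar>(g \<circ> (\<sigma> ^^ n)) x\<bar>} = {x \<in> space M. (\<sigma> ^^ n) x \<in> {x \<in> space M. l < \<bar>g x\<bar>}}"
    using sn_in by auto
  also have "\<dots> = (\<tau> ^^ n) ` {x \<in> space M. l < \<bar>g x\<bar>}" by (rule pre_s) auto
  finally show ?thesis unfolding distr_fun_def by simp
qed

lemma Aplus_t:
  assumes tm: "\<tau> \<in> measurable M M" and img: "\<forall>A\<in>sets M. \<tau> ` A \<in> sets M"
    and bd1: "\<forall>A\<in>sets M. emeasure M (\<tau> -` A \<inter> space M) \<le> ennreal c * emeasure M A" and c: "0 \<le> c"
    and bd2: "\<forall>A\<in>sets M. emeasure M (\<tau> ` A) \<le> ennreal c' * emeasure M A" and c': "0 \<le> c'"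
    and A: "A \<in> Aplus M"
  shows "(\<tau> ^^ n) ` A \<in> Aplus M"
proof -
  have As: "A \<in> sets M" and A0: "0 < emeasure M A" and Af: "emeasure M A < \<infinity>"
    using A unfolding Aplus_def by auto
  have s: "(\<tau> ^^ n) ` A \<in> sets M" by (rule tn_sets[OF img As])
  have "emeasure M ((\<tau> ^^ n) ` A) \<le> ennreal (c' ^ n) * emeasure M A" by (rule tn_bound[OF img bd2 c' As])
  also have "\<dots> < \<infinity>" using Af by (simp add: ennreal_mult_less_top)
  finally have f: "emeasure M ((\<tau> ^^ n) ` A) < \<infinity>" .
  have "emeasure M A = emeasure M ((\<sigma> ^^ n) ` (\<tau> ^^ n) ` A)"
    using st_img sets.sets_into_space[OF As] by simp
  also have "\<dots> \<le> ennreal (c ^ n) * emeasure M ((\<tau> ^^ n) ` A)" by (rule sn_bound[OF tm bd1 c s])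
  finally have "0 < emeasure M ((\<tau> ^^ n) ` A)" using A0 by (cases "emeasure M ((\<tau> ^^ n) ` A) = 0") (auto simp: zero_less_iff_neq_zero)
  then show ?thesis using s f by (simp add: Aplus_def)
qed

lemma Aplus_s:
  assumes tm: "\<tau> \<in> measurable M M" and img: "\<forall>A\<in>sets M. \<tau> ` A \<in> sets M"
    and bd1: "\<forall>A\<in>sets M. emeasure M (\<tau> -` A \<inter> space M) \<le> ennreal c * emeasure M A" and c: "0 \<le> c"
    and bd2: "\<forall>A\<in>sets M. emeasure M (\<tau> ` A) \<le> ennreal c' * emeasure M A" and c': "0 \<le> c'"
    and A: "A \<in> Aplus M"
  shows "(\<sigma> ^^ n) ` A \<in> Aplus M"
proof -
  have As: "A \<in> sets M" and A0: "0 < emeasure M A" and Af: "emeasure M A < \<infinity>"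
    using A unfolding Aplus_def by auto
  have s: "(\<sigma> ^^ n) ` A \<in> sets M" by (rule sn_sets[OF tm As])
  have "emeasure M ((\<sigma> ^^ n) ` A) \<le> ennreal (c ^ n) * emeasure M A" by (rule sn_bound[OF tm bd1 c As])
  also have "\<dots> < \<infinity>" using Af by (simp add: ennreal_mult_less_top)
  finally have f: "emeasure M ((\<sigma> ^^ n) ` A) < \<infinity>" .
  have "emeasure M A = emeasure M ((\<tau> ^^ n) ` (\<sigma> ^^ n) ` A)"
    using ts_img sets.sets_into_space[OF As] by simp
  also have "\<dots> \<le> ennreal (c' ^ n) * emeasure M ((\<sigma> ^^ n) ` A)" by (rule tn_bound[OF img bd2 c' s])
  finally have "0 < emeasure M ((\<sigma> ^^ n) ` A)" using A0 by (cases "emeasure M ((\<sigma> ^^ n) ` A) = 0") (auto simp: zero_less_iff_neq_zero)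
  then show ?thesis using s f by (simp add: Aplus_def)
qed

end

lemma ratio_W:
  assumes o: "orlicz_function \<phi>" and WA: "0 < WA" and WB: "0 < WB" and K: "1 < K"
    and r: "K \<le> phi_inv \<phi> (1 / WA) / phi_inv \<phi> (1 / WB)"
  shows "K * WA \<le> WB"
proof -
  define yA yB where "yA = 1 / WA" and "yB = 1 / WB"
  have yA: "0 < yA" and yB: "0 < yB" using WA WB by (auto simp: yA_def yB_def)
  define fA fB where "fA = phi_inv \<phi> yA" and "fB = phi_inv \<phi> yB"
  have fA: "0 < fA" and fB: "0 < fB" using phi_inv_pos[OF o] yA yB by (auto simp: fA_def fB_def)
  have rr: "K \<le> fA / fB" using r by (simp add: fA_def fB_def yA_def yB_def)
  have "yB < yA"
  proof (rule ccontr)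
    assume "\<not> yB < yA"
    then have "fA \<le> fB" unfolding fA_def fB_def using phi_inv_mono[OF o] yA by simp
    then have "fA / fB \<le> 1" using fB by simp
    then show False using rr K by simp
  qed
  define t where "t = yB / yA"
  have t: "0 < t" "t \<le> 1" using yA yB \<open>yB < yA\<close> by (auto simp: t_def)
  have "\<phi> (t * fA) \<le> t * \<phi> fA" using orl_convex_scale[OF o t(1)[THEN less_imp_le] t(2)] fA by simp
  also have "\<phi> fA = yA" unfolding fA_def using phi_inv(2)[OF o] yA by simp
  also have "t * yA = yB" using yA by (simp add: t_def)
  finally have "t * fA \<le> fB" unfolding fB_def using phi_le_iff[OF o _ ] t fA yB by (simp add: less_imp_le)
  then have "fA / fB \<le> 1 / t" using t fB by (simp add: field_simps)
  then have "K \<le> yA / yB" using rr by (simp add: t_def)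
  then show ?thesis using WA WB by (simp add: yA_def yB_def field_simps)
qed

lemma lc_meas:
  assumes o: "orlicz_function \<phi>" and g: "g \<in> borel_measurable M"
  shows "(\<lambda>s. indicator {0..} s * Wf M h (distr_fun M g (phi_inv \<phi> s))) \<in> borel_measurable lborel"
proof -
  define F where "F s = Wf M h (distr_fun M g (phi_inv \<phi> (max s 0)))" for s
  have "F y \<le> F x" if "x \<le> y" for x y
    unfolding F_def using that
    by (intro Wf_mono distr_fun_antimono[OF g] phi_inv_mono[OF o]) auto
  then have [measurable]: "F \<in> borel_measurable borel" by (intro antimono_borel)
  have "(\<lambda>s. indicator {0..} s * Wf M h (distr_fun M g (phi_inv \<phi> s))) = (\<lambda>s. indicator {0..} s * F s)"
    by (auto simp: F_def indicator_def)
  also have "\<dots> \<in> borel_measurable lborel" by measurable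
  finally show ?thesis .
qed



lemma divstuff: fixes m n :: nat assumes "0 < n"
  shows "m \<le> (m div n + 1) * n" "(m div n + 1) * n - m \<le> n"
proof -
  have e: "m = m div n * n + m mod n" by simp
  have l: "m mod n < n" using assms by simp
  have "(m div n + 1) * n = m div n * n + n" by simp
  then show "m \<le> (m div n + 1) * n" "(m div n + 1) * n - m \<le> n" using e l by linarith+
qed

lemma kkdiv: fixes m n k0 :: nat assumes "0 < n" "k0 * n \<le> m" shows "k0 \<le> m div n"
proof -
  have "(k0 * n) div n \<le> m div n" using assms(2) by (rule div_le_mono)
  then show ?thesis using assms(1) by simp
qed

lemma fwd:
  fixes \<phi> h :: "real \<Rightarrow> real" and M :: "'a measure" and \<tau> :: "'a \<Rightarrow> 'a"
  assumes o: "orlicz_function \<phi>" and w: "weight M h"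
    and tm: "\<tau> \<in> measurable M M" and img: "\<forall>A\<in>sets M. \<tau> ` A \<in> sets M"
    and bij: "bij_betw \<tau> (space M) (space M)"
    and bd1: "\<forall>A\<in>sets M. emeasure M (\<tau> -` A \<inter> space M) \<le> ennreal c * emeasure M A" and c: "0 \<le> c"
    and bd2: "\<forall>A\<in>sets M. emeasure M (\<tau> ` A) \<le> ennreal c' * emeasure M A" and c': "0 \<le> c'"
    and op: "\<forall>g\<in>OL_space \<phi> h M. (g \<circ> \<tau>) \<in> OL_space \<phi> h M \<and>
            OL_norm \<phi> h M (g \<circ> \<tau>) \<le> C * OL_norm \<phi> h M g"
    and ue: "comp_unif_expansive \<phi> h M \<tau>"
  shows "\<exists>AB AC. Aplus M = AB \<union> AC \<and>
       (\<forall>K::real. \<exists>N. \<forall>n\<ge>N. \<forall>A\<in>AB.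
          fund \<phi> h M A / fund \<phi> h M ((\<tau> ^^ n) ` A) \<ge> K) \<and>
       (\<forall>K::real. \<exists>N. \<forall>n\<ge>N. \<forall>A\<in>AC.
          fund \<phi> h M A / fund \<phi> h M ((inv_into (space M) \<tau> ^^ n) ` A) \<ge> K)"
proof -
  define \<sigma> where "\<sigma> = inv_into (space M) \<tau>"
  define f where "f = fund \<phi> h M"
  have fpos: "\<And>A. A \<in> Aplus M \<Longrightarrow> 0 < f A" unfolding f_def by (rule fund_pos[OF o w])
  have APt: "\<And>A k. A \<in> Aplus M \<Longrightarrow> (\<tau> ^^ k) ` A \<in> Aplus M"
    by (rule Aplus_t[OF bij tm img bd1 c bd2 c'])
  have APs: "\<And>A k. A \<in> Aplus M \<Longrightarrow> (\<sigma> ^^ k) ` A \<in> Aplus M"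
    unfolding \<sigma>_def by (rule Aplus_s[OF bij tm img bd1 c bd2 c'])
  have Asp: "\<And>A. A \<in> Aplus M \<Longrightarrow> A \<subseteq> space M"
    using sets.sets_into_space by (auto simp: Aplus_def)
  obtain n where n: "\<forall>g\<in>OL_space \<phi> h M. OL_norm \<phi> h M g = 1 \<longrightarrow>
        OL_norm \<phi> h M (g \<circ> (\<tau> ^^ n)) \<ge> 2 \<or> OL_norm \<phi> h M (g \<circ> (\<sigma> ^^ n)) \<ge> 2"
    using ue unfolding comp_unif_expansive_def \<sigma>_def by blast
  have E1: "f ((\<sigma> ^^ n) ` A) \<le> f A / 2 \<or> f ((\<tau> ^^ n) ` A) \<le> f A / 2" if A: "A \<in> Aplus M" for A
  proof -
    define a where "a = f A"
    have a: "0 < a" using fpos[OF A] by (simp add: a_def)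
    define g where "g = (\<lambda>x. a * indicator A x :: real)"
    have gs: "g \<in> OL_space \<phi> h M" and gn: "OL_norm \<phi> h M g = a / f A"
      using ind_norm[OF o w A a] by (simp_all add: g_def f_def)
    have "OL_norm \<phi> h M g = 1" using gn a by (simp add: a_def)
    then have or: "OL_norm \<phi> h M (g \<circ> (\<tau> ^^ n)) \<ge> 2 \<or> OL_norm \<phi> h M (g \<circ> (\<sigma> ^^ n)) \<ge> 2"
      using n gs by blast
    have n1: "OL_norm \<phi> h M (g \<circ> (\<tau> ^^ n)) = a / f ((\<sigma> ^^ n) ` A)"
    proof -
      have "OL_norm \<phi> h M (g \<circ> (\<tau> ^^ n)) = OL_norm \<phi> h M (\<lambda>x. a * indicator ((\<sigma> ^^ n) ` A) x)"
      proof (rule OL_norm_cong)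
        fix x assume x: "x \<in> space M"
        have "x \<in> (\<sigma> ^^ n) ` A \<longleftrightarrow> (\<tau> ^^ n) x \<in> A"
          using pre_t[OF bij Asp[OF A], of n] x unfolding \<sigma>_def by blast
        then show "\<bar>(g \<circ> (\<tau> ^^ n)) x\<bar> = \<bar>a * indicator ((\<sigma> ^^ n) ` A) x\<bar>"
          by (simp add: g_def indicator_def)
      qed
      also have "\<dots> = a / f ((\<sigma> ^^ n) ` A)"
        using ind_norm[OF o w APs[OF A] a] by (simp add: f_def)
      finally show ?thesis .
    qed
    have n2: "OL_norm \<phi> h M (g \<circ> (\<sigma> ^^ n)) = a / f ((\<tau> ^^ n) ` A)"
    proof -
      have "OL_norm \<phi> h M (g \<circ> (\<sigma> ^^ n)) = OL_norm \<phi> h M (\<lambda>x. a * indicator ((\<tau> ^^ n) ` A) x)"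
      proof (rule OL_norm_cong)
        fix x assume x: "x \<in> space M"
        have "x \<in> (\<tau> ^^ n) ` A \<longleftrightarrow> (\<sigma> ^^ n) x \<in> A"
          using pre_s[OF bij Asp[OF A], of n] x unfolding \<sigma>_def by blast
        then show "\<bar>(g \<circ> (\<sigma> ^^ n)) x\<bar> = \<bar>a * indicator ((\<tau> ^^ n) ` A) x\<bar>"
          by (simp add: g_def indicator_def)
      qed
      also have "\<dots> = a / f ((\<tau> ^^ n) ` A)"
        using ind_norm[OF o w APt[OF A] a] by (simp add: f_def)
      finally show ?thesis .
    qed
    have p1: "0 < f ((\<sigma> ^^ n) ` A)" by (rule fpos[OF APs[OF A]])
    have p2: "0 < f ((\<tau> ^^ n) ` A)" by (rule fpos[OF APt[OF A]])
    show ?thesis using or n1 n2 p1 p2 unfolding a_def by (auto simp: le_divide_eq)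
  qed
  define C0 where "C0 = max 1 C"
  have C0: "1 \<le> C0" by (simp add: C0_def)
  have dist1: "f (\<tau> ` B) \<le> C0 * f B" if B: "B \<in> Aplus M" for B
  proof -
    have tB: "\<tau> ` B \<in> Aplus M" using APt[OF B, of 1] by simp
    define g where "g = (\<lambda>x. 1 * indicator (\<tau> ` B) x :: real)"
    have gs: "g \<in> OL_space \<phi> h M" and gn: "OL_norm \<phi> h M g = 1 / f (\<tau> ` B)"
      using ind_norm[OF o w tB, of 1] by (simp_all add: g_def f_def)
    have "OL_norm \<phi> h M (g \<circ> \<tau>) = OL_norm \<phi> h M (\<lambda>x. 1 * indicator B x)"
    proof (rule OL_norm_cong)
      fix x assume x: "x \<in> space M"
      have "\<tau> x \<in> \<tau> ` B \<longleftrightarrow> x \<in> B"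
        using bij x Asp[OF B] unfolding bij_betw_def inj_on_def by blast
      then show "\<bar>(g \<circ> \<tau>) x\<bar> = \<bar>1 * indicator B x\<bar>" by (simp add: g_def indicator_def)
    qed
    also have "\<dots> = 1 / f B" using ind_norm[OF o w B, of 1] by (simp add: f_def)
    finally have "1 / f B \<le> C * (1 / f (\<tau> ` B))" using op gs gn by metis
    then have "f (\<tau> ` B) \<le> C * f B" using fpos[OF B] fpos[OF tB] by (simp add: field_simps)
    also have "\<dots> \<le> C0 * f B" using fpos[OF B] by (intro mult_right_mono) (auto simp: C0_def)
    finally show ?thesis .
  qed
  have distr: "f ((\<tau> ^^ r) ` B) \<le> C0 ^ r * f B" if B: "B \<in> Aplus M" for B r
  proof (induction r)
    case (Suc r)
    have "f ((\<tau> ^^ Suc r) ` B) = f (\<tau> ` (\<tau> ^^ r) ` B)" by (simp add: image_comp)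
    also have "\<dots> \<le> C0 * f ((\<tau> ^^ r) ` B)" by (rule dist1[OF APt[OF B]])
    also have "\<dots> \<le> C0 * (C0 ^ r * f B)" using Suc C0 by (intro mult_left_mono) auto
    finally show ?case by simp
  qed simp
  show ?thesis
  proof (cases "n = 0")
    case True
    have "Aplus M = {}"
    proof (rule ccontr)
      assume "Aplus M \<noteq> {}"
      then obtain A where A: "A \<in> Aplus M" by auto
      then show False using E1[OF A] fpos[OF A] True by simp
    qed
    then show ?thesis by blast
  next
    case False
    then have n0: "0 < n" by simp
    define AB where "AB = {A \<in> Aplus M. f ((\<tau> ^^ n) ` A) \<le> f A / 2}"
    define AC where "AC = {A \<in> Aplus M. f ((\<sigma> ^^ n) ` A) \<le> f A / 2}"
    have un: "Aplus M = AB \<union> AC" using E1 unfolding AB_def AC_def by auto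
    have ABc: "(\<tau> ^^ n) ` A \<in> AB" if A: "A \<in> AB" for A
    proof -
      have A': "A \<in> Aplus M" and le: "f ((\<tau> ^^ n) ` A) \<le> f A / 2" using A by (auto simp: AB_def)
      define B where "B = (\<tau> ^^ n) ` A"
      have B: "B \<in> Aplus M" unfolding B_def by (rule APt[OF A'])
      have "(\<sigma> ^^ n) ` B = A" unfolding B_def \<sigma>_def by (rule st_img[OF bij Asp[OF A']])
      then have "\<not> f ((\<sigma> ^^ n) ` B) \<le> f B / 2" using le fpos[OF A'] unfolding B_def by simp
      then have "f ((\<tau> ^^ n) ` B) \<le> f B / 2" using E1[OF B] by blast
      then show ?thesis using B unfolding AB_def B_def by simp
    qed
    have ACc: "(\<sigma> ^^ n) ` A \<in> AC" if A: "A \<in> AC" for A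
    proof -
      have A': "A \<in> Aplus M" and le: "f ((\<sigma> ^^ n) ` A) \<le> f A / 2" using A by (auto simp: AC_def)
      define B where "B = (\<sigma> ^^ n) ` A"
      have B: "B \<in> Aplus M" unfolding B_def by (rule APs[OF A'])
      have "(\<tau> ^^ n) ` B = A" unfolding B_def \<sigma>_def by (rule ts_img[OF bij Asp[OF A']])
      then have "\<not> f ((\<tau> ^^ n) ` B) \<le> f B / 2" using le fpos[OF A'] unfolding B_def by simp
      then have "f ((\<sigma> ^^ n) ` B) \<le> f B / 2" using E1[OF B] by blast
      then show ?thesis using B unfolding AC_def B_def by simp
    qed
    have ABk: "(\<tau> ^^ (k * n)) ` A \<in> AB \<and> f ((\<tau> ^^ (k * n)) ` A) \<le> f A / 2 ^ k" if A: "A \<in> AB" for A k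
    proof (induction k)
      case 0 then show ?case using A by simp
    next
      case (Suc k)
      have eq: "(\<tau> ^^ (Suc k * n)) ` A = (\<tau> ^^ n) ` (\<tau> ^^ (k * n)) ` A"
        by (simp add: funpow_add image_comp)
      have "f ((\<tau> ^^ n) ` (\<tau> ^^ (k * n)) ` A) \<le> f ((\<tau> ^^ (k * n)) ` A) / 2"
        using Suc by (auto simp: AB_def)
      also have "\<dots> \<le> f A / 2 ^ k / 2" using Suc by simp
      finally show ?case unfolding eq using ABc Suc by (simp add: field_simps)
    qed
    have ACk: "(\<sigma> ^^ (k * n)) ` A \<in> AC \<and> f ((\<sigma> ^^ (k * n)) ` A) \<le> f A / 2 ^ k" if A: "A \<in> AC" for A k
    proof (induction k)
      case 0 then show ?case using A by simp
    next
      case (Suc k)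
      have eq: "(\<sigma> ^^ (Suc k * n)) ` A = (\<sigma> ^^ n) ` (\<sigma> ^^ (k * n)) ` A"
        by (simp add: funpow_add image_comp)
      have "f ((\<sigma> ^^ n) ` (\<sigma> ^^ (k * n)) ` A) \<le> f ((\<sigma> ^^ (k * n)) ` A) / 2"
        using Suc by (auto simp: AC_def)
      also have "\<dots> \<le> f A / 2 ^ k / 2" using Suc by simp
      finally show ?case unfolding eq using ACc Suc by (simp add: field_simps)
    qed
    have key: "K \<le> f A / f B" if "f B \<le> C0 ^ n * (f A / 2 ^ k)" "K * C0 ^ n \<le> 2 ^ k" "0 < f A" "0 < f B"
      for A B K and k :: nat
    proof -
      have cpos: "0 < C0 ^ n" using C0 by simp
      show ?thesis
      proof (cases "K \<le> 0")
        case True then show ?thesis using that by (auto intro: order_trans[of _ 0] simp: divide_nonneg_pos)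
      next
        case False
        have "K * f B \<le> K * (C0 ^ n * (f A / 2 ^ k))" using False that(1) by (intro mult_left_mono) auto
        also have "\<dots> = (K * C0 ^ n) * f A / 2 ^ k" by simp
        also have "\<dots> \<le> 2 ^ k * f A / 2 ^ k" using that(2,3) by (intro divide_right_mono mult_right_mono) auto
        also have "\<dots> = f A" by simp
        finally show ?thesis using that(4) by (simp add: le_divide_eq)
      qed
    qed
    have conv: "\<exists>k0::nat. K * C0 ^ n \<le> 2 ^ k0" for K :: real
      using real_arch_pow[of 2 "K * C0 ^ n"] by (auto intro: less_imp_le)
    have partB: "\<forall>K::real. \<exists>N. \<forall>m\<ge>N. \<forall>A\<in>AB. f A / f ((\<tau> ^^ m) ` A) \<ge> K"
    proof
      fix K :: real
      obtain k0 :: nat where k0: "K * C0 ^ n \<le> 2 ^ k0" using conv by blast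
      show "\<exists>N. \<forall>m\<ge>N. \<forall>A\<in>AB. f A / f ((\<tau> ^^ m) ` A) \<ge> K"
      proof (intro exI[of _ "k0 * n"] allI impI ballI)
        fix m A assume m: "k0 * n \<le> m" and A: "A \<in> AB"
        have A': "A \<in> Aplus M" using A by (simp add: AB_def)
        define k r where "k = m div n" and "r = m mod n"
        have mkr: "m = r + k * n" by (simp add: k_def r_def)
        have kk: "k0 \<le> k" using kkdiv[OF n0 m] unfolding k_def .
        have rn: "r \<le> n" using n0 by (simp add: r_def less_imp_le)
        have eq: "(\<tau> ^^ m) ` A = (\<tau> ^^ r) ` (\<tau> ^^ (k * n)) ` A"
          unfolding mkr by (simp add: funpow_add image_comp)
        have Bk: "(\<tau> ^^ (k * n)) ` A \<in> Aplus M" using ABk[OF A, of k] by (simp add: AB_def)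
        have "f ((\<tau> ^^ m) ` A) \<le> C0 ^ r * f ((\<tau> ^^ (k * n)) ` A)" unfolding eq by (rule distr[OF Bk])
        also have "\<dots> \<le> C0 ^ n * f ((\<tau> ^^ (k * n)) ` A)"
          using C0 rn fpos[OF Bk] by (intro mult_right_mono power_increasing) auto
        also have "\<dots> \<le> C0 ^ n * (f A / 2 ^ k)" using ABk[OF A, of k] C0 by (intro mult_left_mono) auto
        finally have le: "f ((\<tau> ^^ m) ` A) \<le> C0 ^ n * (f A / 2 ^ k)" .
        have "K * C0 ^ n \<le> 2 ^ k" using k0 kk by (meson order_trans one_le_numeral power_increasing)
        then show "K \<le> f A / f ((\<tau> ^^ m) ` A)" using key[OF le] fpos[OF A'] fpos[OF APt[OF A']] by blast
      qed
    qed
    have partC: "\<forall>K::real. \<exists>N. \<forall>m\<ge>N. \<forall>A\<in>AC. f A / f ((\<sigma> ^^ m) ` A) \<ge> K"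
    proof
      fix K :: real
      obtain k0 :: nat where k0: "K * C0 ^ n \<le> 2 ^ k0" using conv by blast
      show "\<exists>N. \<forall>m\<ge>N. \<forall>A\<in>AC. f A / f ((\<sigma> ^^ m) ` A) \<ge> K"
      proof (intro exI[of _ "k0 * n"] allI impI ballI)
        fix m A assume m: "k0 * n \<le> m" and A: "A \<in> AC"
        have A': "A \<in> Aplus M" using A by (simp add: AC_def)
        define k where "k = m div n + 1"
        define r where "r = k * n - m"
        have mkr: "k * n = r + m" using divstuff(1)[OF n0, of m] unfolding r_def k_def by simp
        have kk: "k0 \<le> k" using kkdiv[OF n0 m] unfolding k_def by simp
        have rn: "r \<le> n" using divstuff(2)[OF n0, of m] unfolding r_def k_def .
        have Qm: "(\<sigma> ^^ m) ` A \<in> Aplus M" by (rule APs[OF A'])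
        have eq0: "(\<sigma> ^^ (k * n)) ` A = (\<sigma> ^^ r) ` (\<sigma> ^^ m) ` A"
          unfolding mkr by (simp add: funpow_add image_comp)
        have e1: "(\<tau> ^^ r) ` (\<sigma> ^^ r) ` (\<sigma> ^^ m) ` A = (\<sigma> ^^ m) ` A"
          using ts_img[OF bij Asp[OF Qm], of r] unfolding \<sigma>_def by simp
        have eq: "(\<sigma> ^^ m) ` A = (\<tau> ^^ r) ` (\<sigma> ^^ (k * n)) ` A"
          unfolding eq0 using e1 by simp
        have Bk: "(\<sigma> ^^ (k * n)) ` A \<in> Aplus M" using ACk[OF A, of k] by (simp add: AC_def)
        have "f ((\<sigma> ^^ m) ` A) \<le> C0 ^ r * f ((\<sigma> ^^ (k * n)) ` A)" unfolding eq by (rule distr[OF Bk])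
        also have "\<dots> \<le> C0 ^ n * f ((\<sigma> ^^ (k * n)) ` A)"
          using C0 rn fpos[OF Bk] by (intro mult_right_mono power_increasing) auto
        also have "\<dots> \<le> C0 ^ n * (f A / 2 ^ k)" using ACk[OF A, of k] C0 by (intro mult_left_mono) auto
        finally have le: "f ((\<sigma> ^^ m) ` A) \<le> C0 ^ n * (f A / 2 ^ k)" .
        have "K * C0 ^ n \<le> 2 ^ k" using k0 kk by (meson order_trans one_le_numeral power_increasing)
        then show "K \<le> f A / f ((\<sigma> ^^ m) ` A)" using key[OF le] fpos[OF A'] fpos[OF Qm] by blast
      qed
    qed
    show ?thesis using un partB partC unfolding f_def \<sigma>_def by blast
  qed
qed

lemma Wf_top_SUP:
  assumes w: "weight M h" and As: "range A \<subseteq> sets M" and inc: "incseq A"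
    and sup: "(SUP i. emeasure M (A i)) = \<infinity>"
  shows "Wf M h \<infinity> = (SUP i. Wf M h (emeasure M (A i)))"
proof -
  have [measurable]: "wh M h \<in> borel_measurable borel" by (rule wh_meas[OF w])
  define F where "F i t = ennreal (wh M h t) * indicator {t. ennreal t < emeasure M (A i)} t" for i t
  have Fm: "F i \<in> borel_measurable lborel" for i unfolding F_def by measurable
  have mono: "emeasure M (A i) \<le> emeasure M (A j)" if "i \<le> j" for i j
    using inc that As by (intro emeasure_mono) (auto simp: incseq_def)
  have Finc: "incseq F"
    unfolding incseq_def le_fun_def F_def
    by (auto intro!: mult_left_mono simp: indicator_def intro: less_le_trans[OF _ mono])
  have pt: "(SUP i. F i t) = ennreal (wh M h t) * indicator {t. ennreal t < \<infinity>} t" for t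
  proof (rule antisym)
    show "(SUP i. F i t) \<le> ennreal (wh M h t) * indicator {t. ennreal t < \<infinity>} t"
      by (intro SUP_least) (auto simp: F_def indicator_def)
  next
    have "ennreal t < (SUP i. emeasure M (A i))" unfolding sup by simp
    then obtain i where "ennreal t < emeasure M (A i)" unfolding less_SUP_iff by blast
    then have "F i t = ennreal (wh M h t) * indicator {t. ennreal t < \<infinity>} t" by (simp add: F_def)
    then show "ennreal (wh M h t) * indicator {t. ennreal t < \<infinity>} t \<le> (SUP i. F i t)"
      by (metis SUP_upper UNIV_I)
  qed
  have "Wf M h \<infinity> = (\<integral>\<^sup>+ t. (SUP i. F i t) \<partial>lborel)" unfolding Wf_def pt ..
  also have "\<dots> = (SUP i. integral\<^sup>N lborel (F i))"
    by (rule nn_integral_monotone_convergence_SUP[OF Finc Fm])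
  finally show ?thesis unfolding Wf_def F_def .
qed

lemma bwd:
  fixes \<phi> h :: "real \<Rightarrow> real" and M :: "'a measure" and \<tau> :: "'a \<Rightarrow> 'a"
  assumes o: "orlicz_function \<phi>" and w: "weight M h"
    and Kd: "0 < Kd" "\<forall>s>0. \<phi> (2 * s) \<le> Kd * \<phi> s"
    and sf: "sigma_finite_measure M"
    and tm: "\<tau> \<in> measurable M M" and img: "\<forall>A\<in>sets M. \<tau> ` A \<in> sets M"
    and bij: "bij_betw \<tau> (space M) (space M)"
    and bd1: "\<forall>A\<in>sets M. emeasure M (\<tau> -` A \<inter> space M) \<le> ennreal c * emeasure M A" and c: "0 \<le> c"
    and bd2: "\<forall>A\<in>sets M. emeasure M (\<tau> ` A) \<le> ennreal c' * emeasure M A" and c': "0 \<le> c'"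
    and un: "Aplus M = AB \<union> AC"
    and limB: "\<forall>K::real. \<exists>N. \<forall>n\<ge>N. \<forall>A\<in>AB. fund \<phi> h M A / fund \<phi> h M ((\<tau> ^^ n) ` A) \<ge> K"
    and limC: "\<forall>K::real. \<exists>N. \<forall>n\<ge>N. \<forall>A\<in>AC.
          fund \<phi> h M A / fund \<phi> h M ((inv_into (space M) \<tau> ^^ n) ` A) \<ge> K"
  shows "comp_unif_expansive \<phi> h M \<tau>"
proof -
  define \<sigma> where "\<sigma> = inv_into (space M) \<tau>"
  define f where "f = fund \<phi> h M"
  have fpos: "\<And>A. A \<in> Aplus M \<Longrightarrow> 0 < f A" unfolding f_def by (rule fund_pos[OF o w])
  have APt: "\<And>A k. A \<in> Aplus M \<Longrightarrow> (\<tau> ^^ k) ` A \<in> Aplus M"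
    by (rule Aplus_t[OF bij tm img bd1 c bd2 c'])
  have APs: "\<And>A k. A \<in> Aplus M \<Longrightarrow> (\<sigma> ^^ k) ` A \<in> Aplus M"
    unfolding \<sigma>_def by (rule Aplus_s[OF bij tm img bd1 c bd2 c'])
  have Asp: "\<And>A. A \<in> sets M \<Longrightarrow> A \<subseteq> space M" using sets.sets_into_space by auto
  have Wf_A: "Wf M h (emeasure M A) = ennreal (Wint h (measure M A))" if A: "A \<in> Aplus M" for A
    using Wf_real[OF w _ Aplus_facts(4)[OF A]] Aplus_facts(3)[OF A] by simp
  have finc: "Wf M h \<infinity> = \<infinity>" if X: "emeasure M (space M) = \<infinity>"
  proof (rule ccontr)
    assume nt: "Wf M h \<infinity> \<noteq> \<infinity>"
    obtain A :: "nat \<Rightarrow> 'a set" where As: "range A \<subseteq> sets M" and cov: "(\<Union>i. A i) = space M"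
      and Af: "\<And>i. emeasure M (A i) \<noteq> \<infinity>" and inc: "incseq A"
      using sigma_finite_measure.sigma_finite_incseq[OF sf] by metis
    have sup: "(SUP i. emeasure M (A i)) = \<infinity>" using SUP_emeasure_incseq[OF As inc] cov X by simp
    have WS: "Wf M h \<infinity> = (SUP i. Wf M h (emeasure M (A i)))" by (rule Wf_top_SUP[OF w As inc sup])
    have AiP: "A i \<in> Aplus M" if "0 < emeasure M (A i)" for i
      using that As Af by (auto simp: Aplus_def less_top)
    obtain i0 where "0 < emeasure M (A i0)"
    proof -
      have "0 < (SUP i. emeasure M (A i))" unfolding sup by simp
      then show ?thesis using that unfolding less_SUP_iff by blast
    qed
    then have P0: "A i0 \<in> Aplus M" by (rule AiP)
    have "0 < Wf M h (emeasure M (A i0))"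
      using Wf_A[OF P0] Wint_pos_Aplus[OF w P0] by simp
    also have "\<dots> \<le> Wf M h \<infinity>" by (rule Wf_mono) simp
    finally have Wpos: "0 < Wf M h \<infinity>" .
    obtain wi where wi: "Wf M h \<infinity> = ennreal wi" "0 \<le> wi" using nt by (cases "Wf M h \<infinity>") auto
    have wi0: "0 < wi" using Wpos wi by (simp add: ennreal_less_zero_iff)
    define b where "b = phi_inv \<phi> (1 / wi)"
    have b: "0 < b" unfolding b_def using wi0 by (intro phi_inv_pos[OF o]) simp
    have fB: "b \<le> f B" if B: "B \<in> Aplus M" for B
    proof -
      have "ennreal (Wint h (measure M B)) \<le> ennreal wi"
        using Wf_A[OF B] Wf_mono[of "emeasure M B" \<infinity> M h] wi by simp
      then have "Wint h (measure M B) \<le> wi" using wi by (simp add: ennreal_le_iff)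
      then have "1 / wi \<le> 1 / Wint h (measure M B)" using Wint_pos_Aplus[OF w B]
        by (simp add: frac_le)
      then show ?thesis unfolding b_def f_def fund_def using wi0 by (intro phi_inv_mono[OF o]) simp_all
    qed
    have "1 / wi < \<phi> (2 * b)" using phi_less_iff[OF o, of "2*b" "1/wi"] b wi0 by (simp add: b_def)
    then have lt: "1 / \<phi> (2 * b) < wi" using wi0 orl_pos[OF o, of "2*b"] b
      by (simp add: field_simps)
    then have "ennreal (1 / \<phi> (2 * b)) < (SUP i. Wf M h (emeasure M (A i)))"
      using WS wi orl_pos[OF o, of "2*b"] b by (simp add: ennreal_less_iff)
    then obtain i where i: "ennreal (1 / \<phi> (2 * b)) < Wf M h (emeasure M (A i))"
      unfolding less_SUP_iff by blast
    have "0 < emeasure M (A i)"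
    proof (rule ccontr)
      assume "\<not> 0 < emeasure M (A i)"
      then have "emeasure M (A i) = 0" by simp
      then show False using i by (simp add: Wf_zero)
    qed
    then have P: "A i \<in> Aplus M" by (rule AiP)
    have "1 / \<phi> (2 * b) < Wint h (measure M (A i))"
    proof -
      have "ennreal (1 / \<phi> (2 * b)) < ennreal (Wint h (measure M (A i)))" using i Wf_A[OF P] by simp
      then show ?thesis using ennreal_less_iff[of "1 / \<phi> (2 * b)" "Wint h (measure M (A i))"]
          orl_pos[OF o, of "2*b"] b by simp
    qed
    then have "1 / Wint h (measure M (A i)) < \<phi> (2 * b)"
      using Wint_pos_Aplus[OF w P] orl_pos[OF o, of "2*b"] b by (simp add: field_simps)
    then have fA: "f (A i) < 2 * b" unfolding f_def fund_def
      using phi_less_iff[OF o, of "2*b"] b Wint_pos_Aplus[OF w P] by simp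
    show False
    proof (cases "A i \<in> AB")
      case True
      obtain N where N: "\<forall>n\<ge>N. \<forall>A\<in>AB. f A / f ((\<tau> ^^ n) ` A) \<ge> 2" using limB unfolding f_def by blast
      then have "2 \<le> f (A i) / f ((\<tau> ^^ N) ` A i)" using True by blast
      moreover have "b \<le> f ((\<tau> ^^ N) ` A i)" by (rule fB[OF APt[OF P]])
      ultimately show False using fA b by (simp add: le_divide_eq)
    next
      case False
      then have "A i \<in> AC" using P un by auto
      obtain N where N: "\<forall>n\<ge>N. \<forall>A\<in>AC. f A / f ((\<sigma> ^^ n) ` A) \<ge> 2" using limC unfolding f_def \<sigma>_def by blast
      then have "2 \<le> f (A i) / f ((\<sigma> ^^ N) ` A i)" using \<open>A i \<in> AC\<close> by blast
      moreover have "b \<le> f ((\<sigma> ^^ N) ` A i)" by (rule fB[OF APs[OF P]])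
      ultimately show False using fA b by (simp add: le_divide_eq)
    qed
  qed
  define K where "K = 4 * Kd^2 + 4"
  have K1: "1 < K" by (simp add: K_def add_pos_nonneg)
  obtain N1 where N1: "\<forall>n\<ge>N1. \<forall>A\<in>AB. f A / f ((\<tau> ^^ n) ` A) \<ge> K" using limB unfolding f_def by blast
  obtain N2 where N2: "\<forall>n\<ge>N2. \<forall>A\<in>AC. f A / f ((\<sigma> ^^ n) ` A) \<ge> K" using limC unfolding f_def \<sigma>_def by blast
  define n where "n = max N1 N2"
  have pw: "ennreal K * Wf M h (emeasure M E) \<le>
      Wf M h (emeasure M ((\<tau> ^^ n) ` E)) + Wf M h (emeasure M ((\<sigma> ^^ n) ` E))"
    if E: "E \<in> sets M" for E
  proof (cases "emeasure M E = 0")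
    case True then show ?thesis by (simp add: Wf_zero)
  next
    case nz: False
    show ?thesis
    proof (cases "emeasure M E = \<infinity>")
      case True
      have "emeasure M E \<le> emeasure M (space M)" by (rule emeasure_space)
      then have X: "emeasure M (space M) = \<infinity>" using True by (simp add: top_unique)
      have PE: "(\<tau> ^^ n) ` E \<in> sets M" by (rule tn_sets[OF bij img E])
      have "emeasure M E = emeasure M ((\<sigma> ^^ n) ` (\<tau> ^^ n) ` E)"
        using st_img[OF bij Asp[OF E]] unfolding \<sigma>_def by simp
      also have "\<dots> \<le> ennreal (c ^ n) * emeasure M ((\<tau> ^^ n) ` E)"
        unfolding \<sigma>_def by (rule sn_bound[OF bij tm bd1 c PE])
      finally have "emeasure M ((\<tau> ^^ n) ` E) = \<infinity>" using True
        by (auto simp: top_unique ennreal_mult_eq_top_iff)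
      then have "Wf M h (emeasure M ((\<tau> ^^ n) ` E)) = \<infinity>" using finc[OF X] by simp
      then show ?thesis by simp
    next
      case False
      then have EP: "E \<in> Aplus M" using E nz by (simp add: Aplus_def less_top zero_less_iff_neq_zero)
      have WE: "0 < Wint h (measure M E)" by (rule Wint_pos_Aplus[OF w EP])
      show ?thesis
      proof (cases "E \<in> AB")
        case True
        have PE: "(\<tau> ^^ n) ` E \<in> Aplus M" by (rule APt[OF EP])
        have "K \<le> f E / f ((\<tau> ^^ n) ` E)" using N1 True by (simp add: n_def)
        then have "K * Wint h (measure M E) \<le> Wint h (measure M ((\<tau> ^^ n) ` E))"
          unfolding f_def fund_def
          by (rule ratio_W[OF o WE Wint_pos_Aplus[OF w PE] K1])
        then have "ennreal K * Wf M h (emeasure M E) \<le> Wf M h (emeasure M ((\<tau> ^^ n) ` E))"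
          using Wf_A[OF EP] Wf_A[OF PE] K1 WE by (simp add: ennreal_mult[symmetric] ennreal_leI)
        then show ?thesis by (rule order_trans) simp
      next
        case False
        then have EC: "E \<in> AC" using EP un by auto
        have PE: "(\<sigma> ^^ n) ` E \<in> Aplus M" by (rule APs[OF EP])
        have "K \<le> f E / f ((\<sigma> ^^ n) ` E)" using N2 EC by (simp add: n_def)
        then have "K * Wint h (measure M E) \<le> Wint h (measure M ((\<sigma> ^^ n) ` E))"
          unfolding f_def fund_def
          by (rule ratio_W[OF o WE Wint_pos_Aplus[OF w PE] K1])
        then have "ennreal K * Wf M h (emeasure M E) \<le> Wf M h (emeasure M ((\<sigma> ^^ n) ` E))"
          using Wf_A[OF EP] Wf_A[OF PE] K1 WE by (simp add: ennreal_mult[symmetric] ennreal_leI)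
        then show ?thesis by (rule order_trans) simp
      qed
    qed
  qed
  have bdt: "Wf M h (emeasure M ((\<tau> ^^ n) ` E)) \<le> ennreal (max 1 (c' ^ n)) * Wf M h (emeasure M E)"
    if E: "E \<in> sets M" for E
  proof -
    have "Wf M h (emeasure M ((\<tau> ^^ n) ` E)) \<le> Wf M h (ennreal (max 1 (c' ^ n)) * emeasure M E)"
    proof (rule Wf_mono)
      have "emeasure M ((\<tau> ^^ n) ` E) \<le> ennreal (c' ^ n) * emeasure M E" by (rule tn_bound[OF bij img bd2 c' E])
      also have "\<dots> \<le> ennreal (max 1 (c' ^ n)) * emeasure M E" by (intro mult_right_mono ennreal_leI) auto
      finally show "emeasure M ((\<tau> ^^ n) ` E) \<le> ennreal (max 1 (c' ^ n)) * emeasure M E" .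
    qed
    also have "\<dots> \<le> ennreal (max 1 (c' ^ n)) * Wf M h (emeasure M E)" by (rule Wf_scale[OF w]) simp
    finally show ?thesis .
  qed
  have bds: "Wf M h (emeasure M ((\<sigma> ^^ n) ` E)) \<le> ennreal (max 1 (c ^ n)) * Wf M h (emeasure M E)"
    if E: "E \<in> sets M" for E
  proof -
    have "Wf M h (emeasure M ((\<sigma> ^^ n) ` E)) \<le> Wf M h (ennreal (max 1 (c ^ n)) * emeasure M E)"
    proof (rule Wf_mono)
      have "emeasure M ((\<sigma> ^^ n) ` E) \<le> ennreal (c ^ n) * emeasure M E"
        unfolding \<sigma>_def by (rule sn_bound[OF bij tm bd1 c E])
      also have "\<dots> \<le> ennreal (max 1 (c ^ n)) * emeasure M E" by (intro mult_right_mono ennreal_leI) auto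
      finally show "emeasure M ((\<sigma> ^^ n) ` E) \<le> ennreal (max 1 (c ^ n)) * emeasure M E" .
    qed
    also have "\<dots> \<le> ennreal (max 1 (c ^ n)) * Wf M h (emeasure M E)" by (rule Wf_scale[OF w]) simp
    finally show ?thesis .
  qed
  show ?thesis
    unfolding comp_unif_expansive_def
  proof (intro exI[of _ n] ballI impI)
    fix g assume gs: "g \<in> OL_space \<phi> h M" and g1: "OL_norm \<phi> h M g = 1"
    have gm[measurable]: "g \<in> borel_measurable M" using gs by (simp add: OL_space_def)
    obtain c0 where c0: "0 < c0" "modular \<phi> h M (\<lambda>x. c0 * g x) < \<infinity>" using gs by (auto simp: OL_space_def)
    have mgf: "modular \<phi> h M g < \<infinity>" using mod_finite_scale[OF o w Kd c0, of 1] by simp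
    have unit: "1 < ennreal Kd * modular \<phi> h M g" by (rule norm_unit[OF o w Kd g1])
    define h1 where "h1 = g \<circ> (\<sigma> ^^ n)"
    define h2 where "h2 = g \<circ> (\<tau> ^^ n)"
    have h1m: "h1 \<in> borel_measurable M" unfolding h1_def \<sigma>_def
      by (rule measurable_comp[OF sn_meas[OF bij img] gm])
    have h2m: "h2 \<in> borel_measurable M" unfolding h2_def
      by (rule measurable_comp[OF tn_meas[OF bij tm] gm])
    define E where "E s = {x \<in> space M. phi_inv \<phi> s < \<bar>g x\<bar>}" for s
    have Es: "E s \<in> sets M" for s unfolding E_def by measurable
    have dg: "distr_fun M g (phi_inv \<phi> s) = emeasure M (E s)" for s by (simp add: distr_fun_def E_def)
    have d1: "distr_fun M h1 (phi_inv \<phi> s) = emeasure M ((\<tau> ^^ n) ` E s)" for s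
      unfolding h1_def \<sigma>_def E_def by (rule distr_comp_s[OF bij gm])
    have d2: "distr_fun M h2 (phi_inv \<phi> s) = emeasure M ((\<sigma> ^^ n) ` E s)" for s
      unfolding h2_def \<sigma>_def E_def by (rule distr_comp_t[OF bij gm])
    have L: "modular \<phi> h M q = (\<integral>\<^sup>+ s. indicator {0..} s * Wf M h (distr_fun M q (phi_inv \<phi> s)) \<partial>lborel)"
      if "q \<in> borel_measurable M" for q by (rule layer_cake[OF o w that])
    have "ennreal K * modular \<phi> h M g =
        (\<integral>\<^sup>+ s. ennreal K * (indicator {0..} s * Wf M h (distr_fun M g (phi_inv \<phi> s))) \<partial>lborel)"
      unfolding L[OF gm] by (rule nn_integral_cmult[symmetric]) (rule lc_meas[OF o gm])
    also have "\<dots> \<le> (\<integral>\<^sup>+ s. indicator {0..} s * Wf M h (distr_fun M h1 (phi_inv \<phi> s)) +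
                          indicator {0..} s * Wf M h (distr_fun M h2 (phi_inv \<phi> s)) \<partial>lborel)"
    proof (intro nn_integral_mono)
      fix s
      have "ennreal K * Wf M h (distr_fun M g (phi_inv \<phi> s)) \<le>
          Wf M h (distr_fun M h1 (phi_inv \<phi> s)) + Wf M h (distr_fun M h2 (phi_inv \<phi> s))"
        unfolding dg d1 d2 by (rule pw[OF Es])
      then show "ennreal K * (indicator {0..} s * Wf M h (distr_fun M g (phi_inv \<phi> s))) \<le>
          indicator {0..} s * Wf M h (distr_fun M h1 (phi_inv \<phi> s)) +
          indicator {0..} s * Wf M h (distr_fun M h2 (phi_inv \<phi> s))"
        by (cases "0 \<le> s") (auto simp: indicator_def)
    qed
    also have "\<dots> = modular \<phi> h M h1 + modular \<phi> h M h2"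
      unfolding L[OF h1m] L[OF h2m] by (rule nn_integral_add) (use lc_meas[OF o h1m] lc_meas[OF o h2m] in simp_all)
    finally have sum: "ennreal K * modular \<phi> h M g \<le> modular \<phi> h M h1 + modular \<phi> h M h2" .
    have f1: "modular \<phi> h M h1 < \<infinity>"
    proof -
      have "modular \<phi> h M h1 \<le> (\<integral>\<^sup>+ s. ennreal (max 1 (c' ^ n)) * (indicator {0..} s * Wf M h (distr_fun M g (phi_inv \<phi> s))) \<partial>lborel)"
        unfolding L[OF h1m] d1 dg
        by (intro nn_integral_mono) (auto simp: indicator_def intro: bdt[OF Es])
      also have "\<dots> = ennreal (max 1 (c' ^ n)) * modular \<phi> h M g"
        unfolding L[OF gm] by (rule nn_integral_cmult) (rule lc_meas[OF o gm])
      also have "\<dots> < \<infinity>" using mgf by (simp add: ennreal_mult_less_top)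
      finally show ?thesis .
    qed
    have f2: "modular \<phi> h M h2 < \<infinity>"
    proof -
      have "modular \<phi> h M h2 \<le> (\<integral>\<^sup>+ s. ennreal (max 1 (c ^ n)) * (indicator {0..} s * Wf M h (distr_fun M g (phi_inv \<phi> s))) \<partial>lborel)"
        unfolding L[OF h2m] d2 dg
        by (intro nn_integral_mono) (auto simp: indicator_def intro: bds[OF Es])
      also have "\<dots> = ennreal (max 1 (c ^ n)) * modular \<phi> h M g"
        unfolding L[OF gm] by (rule nn_integral_cmult) (rule lc_meas[OF o gm])
      also have "\<dots> < \<infinity>" using mgf by (simp add: ennreal_mult_less_top)
      finally show ?thesis .
    qed
    have big: "ennreal Kd < modular \<phi> h M h1 \<or> ennreal Kd < modular \<phi> h M h2"
    proof (rule ccontr)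
      assume "\<not> ?thesis"
      then have le1: "modular \<phi> h M h1 \<le> ennreal Kd" and le2: "modular \<phi> h M h2 \<le> ennreal Kd" by auto
      have "ennreal K = ennreal K * 1" by simp
      also have "\<dots> \<le> ennreal K * (ennreal Kd * modular \<phi> h M g)"
        using unit by (intro mult_left_mono) auto
      also have "\<dots> = ennreal Kd * (ennreal K * modular \<phi> h M g)" by (simp add: ac_simps)
      also have "\<dots> \<le> ennreal Kd * (ennreal Kd + ennreal Kd)"
        using sum le1 le2 by (intro mult_left_mono) (auto intro: order_trans add_mono)
      also have "\<dots> = ennreal (2 * Kd ^ 2)" using Kd by (simp add: ennreal_mult[symmetric] ennreal_plus[symmetric] power2_eq_square del: ennreal_plus)
      finally have "K \<le> 2 * Kd ^ 2" using Kd by (simp add: ennreal_le_iff)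
      moreover have "0 \<le> Kd ^ 2" by simp
      ultimately show False by (simp add: K_def)
    qed
    show "2 \<le> OL_norm \<phi> h M (g \<circ> (\<tau> ^^ n)) \<or> 2 \<le> OL_norm \<phi> h M (g \<circ> (inv_into (space M) \<tau> ^^ n))"
    proof (cases "ennreal Kd < modular \<phi> h M h1")
      case True
      have "2 \<le> OL_norm \<phi> h M h1"
        by (rule norm_big[OF o w Kd h1m, of 1]) (use f1 True in simp_all)
      then show ?thesis unfolding h1_def \<sigma>_def by simp
    next
      case False
      then have "ennreal Kd < modular \<phi> h M h2" using big by simp
      then have "2 \<le> OL_norm \<phi> h M h2"
        by (intro norm_big[OF o w Kd h2m, of 1]) (use f2 in simp_all)
      then show ?thesis unfolding h2_def by simp
    qed
  qed
qed


theorem mainTheorem3: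
  fixes \<phi> h :: "real \<Rightarrow> real" and M :: "'a measure" and \<tau> :: "'a \<Rightarrow> 'a"
  assumes cds: "comp_dyn_system \<phi> h M \<tau>"
    and bij: "bij_betw \<tau> (space M) (space M)"
    and inv_bd: "\<exists>M'>0. \<forall>A\<in>sets M. emeasure M (\<tau> ` A) \<le> ennreal M' * emeasure M A"
    and d2: "delta2 \<phi>"
  shows "comp_unif_expansive \<phi> h M \<tau> \<longleftrightarrow>
    (\<exists>AB AC. Aplus M = AB \<union> AC \<and>
       (\<forall>K::real. \<exists>N. \<forall>n\<ge>N. \<forall>A\<in>AB.
          fund \<phi> h M A / fund \<phi> h M ((\<tau> ^^ n) ` A) \<ge> K) \<and>
       (\<forall>K::real. \<exists>N. \<forall>n\<ge>N. \<forall>A\<in>AC.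
          fund \<phi> h M A / fund \<phi> h M ((inv_into (space M) \<tau> ^^ n) ` A) \<ge> K))"
proof -
  have sf: "sigma_finite_measure M" and o: "orlicz_function \<phi>" and w: "weight M h"
    and tm: "\<tau> \<in> measurable M M" and img: "\<forall>A\<in>sets M. \<tau> ` A \<in> sets M"
    using cds unfolding comp_dyn_system_def by auto
  obtain c where c: "0 < c" and bd1: "\<forall>A\<in>sets M. emeasure M (\<tau> -` A \<inter> space M) \<le> ennreal c * emeasure M A"
    using cds unfolding comp_dyn_system_def by auto
  obtain C where op: "\<forall>g\<in>OL_space \<phi> h M. (g \<circ> \<tau>) \<in> OL_space \<phi> h M \<and>
            OL_norm \<phi> h M (g \<circ> \<tau>) \<le> C * OL_norm \<phi> h M g"
    using cds unfolding comp_dyn_system_def by auto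
  obtain c' where c': "0 < c'" and bd2: "\<forall>A\<in>sets M. emeasure M (\<tau> ` A) \<le> ennreal c' * emeasure M A"
    using inv_bd by auto
  obtain Kd where Kd: "0 < Kd" "\<forall>s>0. \<phi> (2 * s) \<le> Kd * \<phi> s" using d2 unfolding delta2_def by auto
  show ?thesis
  proof
    assume "comp_unif_expansive \<phi> h M \<tau>"
    then show "\<exists>AB AC. Aplus M = AB \<union> AC \<and>
       (\<forall>K::real. \<exists>N. \<forall>n\<ge>N. \<forall>A\<in>AB.
          fund \<phi> h M A / fund \<phi> h M ((\<tau> ^^ n) ` A) \<ge> K) \<and>
       (\<forall>K::real. \<exists>N. \<forall>n\<ge>N. \<forall>A\<in>AC.
          fund \<phi> h M A / fund \<phi> h M ((inv_into (space M) \<tau> ^^ n) ` A) \<ge> K)"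
      by (rule fwd[OF o w tm img bij bd1 less_imp_le[OF c] bd2 less_imp_le[OF c'] op])
  next
    assume "\<exists>AB AC. Aplus M = AB \<union> AC \<and>
       (\<forall>K::real. \<exists>N. \<forall>n\<ge>N. \<forall>A\<in>AB.
          fund \<phi> h M A / fund \<phi> h M ((\<tau> ^^ n) ` A) \<ge> K) \<and>
       (\<forall>K::real. \<exists>N. \<forall>n\<ge>N. \<forall>A\<in>AC.
          fund \<phi> h M A / fund \<phi> h M ((inv_into (space M) \<tau> ^^ n) ` A) \<ge> K)"
    then obtain AB AC where un: "Aplus M = AB \<union> AC"
      and limB: "\<forall>K::real. \<exists>N. \<forall>n\<ge>N. \<forall>A\<in>AB. fund \<phi> h M A / fund \<phi> h M ((\<tau> ^^ n) ` A) \<ge> K"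
      and limC: "\<forall>K::real. \<exists>N. \<forall>n\<ge>N. \<forall>A\<in>AC.
          fund \<phi> h M A / fund \<phi> h M ((inv_into (space M) \<tau> ^^ n) ` A) \<ge> K"
      by blast
    show "comp_unif_expansive \<phi> h M \<tau>"
      by (rule bwd[OF o w Kd sf tm img bij bd1 less_imp_le[OF c] bd2 less_imp_le[OF c'] un limB limC])
  qed
qed

end
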